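(* Let $V=V_0+V_1$ with $V_0\in L^\infty(\mathbb{R})$, $\operatorname{ess\,inf}V_0>0$, and $V_1\in\mathcal{M}_1(\mathbb{R})$. Then for each $a\in\mathbb{R}$ there exists $u_a\in K_a$ with $I(u_a;V)=\min_{u\in K_a}I(u;V)$; that is, $F(a;V)=I(u_a;V)$ is attained.
   Context: Elements of $H^1(\mathbb{R})$ are identified with their continuous representatives; $\|u\|_\infty:=\|u\|_{L^\infty(\mathbb{R})}$. $\mathcal{M}_1(\mathbb{R})$ is the set of signed Radon measures on $\mathbb{R}$ with finite total variation. The potential $V=V_0+V_1$ acts as the bilinear form $V(u,v):=\int_{\mathbb{R}}V_0uv\,dx+\int_{\mathbb{R}}uv\,dV_1$ on $H^1(\mathbb{R})$, and $I(u;V):=\|u'\|_{L^2(\mathbb{R})}^2+V(u,u)$. For $a\in\mathbb{R}$, $K_a:=\{u\in H^1(\mathbb{R}):u(a)=\|u\|_\infty=1\}$ and $F(a;V):=\inf_{u\in K_a}I(u;V)$. *)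

theory Defs
  imports "HOL-Analysis.Analysis" "HOL-Probability.Essential_Supremum"
begin

definition test_fun :: "(real \<Rightarrow> real) \<Rightarrow> bool" where
  "test_fun \<phi> \<longleftrightarrow> \<phi> differentiable_on UNIV \<and> continuous_on UNIV (deriv \<phi>)
     \<and> (\<exists>R. \<forall>x. R < \<bar>x\<bar> \<longrightarrow> \<phi> x = 0)"

definition weak_deriv :: "(real \<Rightarrow> real) \<Rightarrow> (real \<Rightarrow> real) \<Rightarrow> bool" where
  "weak_deriv u g \<longleftrightarrow> g \<in> borel_measurable lborel \<and>
     (\<forall>\<phi>. test_fun \<phi> \<longrightarrow>
        integral\<^sup>L lborel (\<lambda>x. u x * deriv \<phi> x) = - integral\<^sup>L lborel (\<lambda>x. g x * \<phi> x))"

text \<open>H^1(R), elements identified with their continuous representatives.\<close>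
definition H1 :: "(real \<Rightarrow> real) set" where
  "H1 = {u. continuous_on UNIV u \<and> u \<in> borel_measurable lborel
           \<and> integrable lborel (\<lambda>x. (u x)\<^sup>2)
           \<and> (\<exists>g. weak_deriv u g \<and> integrable lborel (\<lambda>x. (g x)\<^sup>2))}"

text \<open>The (a.e. unique) weak derivative u' of u in H^1.\<close>
definition H1_deriv :: "(real \<Rightarrow> real) \<Rightarrow> real \<Rightarrow> real" where
  "H1_deriv u = (SOME g. weak_deriv u g \<and> integrable lborel (\<lambda>x. (g x)\<^sup>2))"

definition sup_norm :: "(real \<Rightarrow> real) \<Rightarrow> real" where
  "sup_norm u = (SUP x. \<bar>u x\<bar>)"

text \<open>A signed Radon measure of finite total variation V1 is represented by its
  Jordan decomposition V1 = mu_p - mu_m with finite Borel measures mu_p, mu_m.\<close>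
definition finite_borel_measure :: "real measure \<Rightarrow> bool" where
  "finite_borel_measure \<mu> \<longleftrightarrow> sets \<mu> = sets borel \<and> finite_measure \<mu>"

definition Vform :: "(real \<Rightarrow> real) \<Rightarrow> real measure \<Rightarrow> real measure
                     \<Rightarrow> (real \<Rightarrow> real) \<Rightarrow> (real \<Rightarrow> real) \<Rightarrow> real" where
  "Vform V0 mu_p mu_m u v =
     integral\<^sup>L lborel (\<lambda>x. V0 x * u x * v x)
     + (integral\<^sup>L mu_p (\<lambda>x. u x * v x) - integral\<^sup>L mu_m (\<lambda>x. u x * v x))"

definition Ifun :: "(real \<Rightarrow> real) \<Rightarrow> (real \<Rightarrow> real) \<Rightarrow> real measure \<Rightarrow> real measure \<Rightarrow> real" where
  "Ifun u V0 mu_p mu_m = integral\<^sup>L lborel (\<lambda>x. (H1_deriv u x)\<^sup>2) + Vform V0 mu_p mu_m u u"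

definition Kset :: "real \<Rightarrow> (real \<Rightarrow> real) set" where
  "Kset a = {u \<in> H1. u a = 1 \<and> sup_norm u = 1}"

definition Ffun :: "real \<Rightarrow> (real \<Rightarrow> real) \<Rightarrow> real measure \<Rightarrow> real measure \<Rightarrow> real" where
  "Ffun a V0 mu_p mu_m = (INF u \<in> Kset a. Ifun u V0 mu_p mu_m)"

end

theory Submission
  imports Defs "HOL-Library.Diagonal_Subsequence"
begin

definition L2 :: "(real \<Rightarrow> real) \<Rightarrow> bool" where
  "L2 f \<longleftrightarrow> f \<in> borel_measurable lborel \<and> integrable lborel (\<lambda>x. (f x)\<^sup>2)"

lemma L2_meas: "L2 f \<Longrightarrow> f \<in> borel_measurable lborel" by (simp add: L2_def)
lemma L2_int: "L2 f \<Longrightarrow> integrable lborel (\<lambda>x. (f x)\<^sup>2)" by (simp add: L2_def)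

lemma L2_prod_integrable:
  assumes "L2 f" "L2 g" shows "integrable lborel (\<lambda>x. f x * g x)"
proof (rule Bochner_Integration.integrable_bound)
  show "integrable lborel (\<lambda>x. (f x)\<^sup>2 + (g x)\<^sup>2)" using assms by (auto simp: L2_def)
  show "(\<lambda>x. f x * g x) \<in> borel_measurable lborel" using assms by (auto simp: L2_def)
  show "AE x in lborel. norm (f x * g x) \<le> norm ((f x)\<^sup>2 + (g x)\<^sup>2)"
  proof (rule AE_I2)
    fix x
    have "2 * \<bar>f x * g x\<bar> \<le> (f x)\<^sup>2 + (g x)\<^sup>2"
      using sum_squares_bound[of "\<bar>f x\<bar>" "\<bar>g x\<bar>"] by (simp add: abs_mult power2_eq_square)
    then show "norm (f x * g x) \<le> norm ((f x)\<^sup>2 + (g x)\<^sup>2)" by simp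
  qed
qed

lemma L2_add: assumes "L2 f" "L2 g" shows "L2 (\<lambda>x. f x + g x)"
proof -
  have "integrable lborel (\<lambda>x. (f x)\<^sup>2 + (g x)\<^sup>2 + 2 * (f x * g x))"
    using assms L2_prod_integrable[OF assms] by (auto simp: L2_def)
  then have "integrable lborel (\<lambda>x. (f x + g x)\<^sup>2)"
    by (simp add: power2_sum algebra_simps)
  then show ?thesis using assms by (auto simp: L2_def)
qed

lemma L2_cmult: assumes "L2 f" shows "L2 (\<lambda>x. c * f x)"
proof -
  have "integrable lborel (\<lambda>x. c\<^sup>2 * (f x)\<^sup>2)" using assms by (auto simp: L2_def)
  then show ?thesis using assms by (auto simp: L2_def power_mult_distrib)
qed

lemma L2_uminus: assumes "L2 f" shows "L2 (\<lambda>x. - f x)"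
  using L2_cmult[OF assms, of "-1"] by simp

lemma L2_diff: assumes "L2 f" "L2 g" shows "L2 (\<lambda>x. f x - g x)"
  using L2_add[OF assms(1) L2_uminus[OF assms(2)]] by simp

lemma L2_zero: "L2 (\<lambda>x. 0)" by (simp add: L2_def)

lemma discr_lemma:
  fixes A B C :: real
  assumes "\<And>t. 0 \<le> t\<^sup>2 * A - 2 * t * B + C"
  shows "B\<^sup>2 \<le> A * C"
proof -
  have A0: "0 \<le> A"
  proof (rule ccontr)
    assume "\<not> 0 \<le> A"
    then have "A < 0" by simp
    define K where "K = 2 * \<bar>B\<bar> + \<bar>C\<bar> + 1"
    define t where "t = K / (- A) + 1"
    have K: "K > 0" by (simp add: K_def)
    have t1: "t \<ge> 1" using \<open>A<0\<close> K by (simp add: t_def divide_pos_neg less_imp_le)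
    have "t * A = - K + A" using \<open>A<0\<close> by (simp add: t_def field_simps)
    then have tA: "t * A \<le> - K" using \<open>A<0\<close> by simp
    have "t\<^sup>2 * A = t * (t * A)" by (simp add: power2_eq_square)
    also have "\<dots> \<le> t * (- K)" using tA t1 by (intro mult_left_mono) auto
    finally have 1: "t\<^sup>2 * A \<le> - t * K" by simp
    have "(2 * t) * (- B) \<le> (2 * t) * \<bar>B\<bar>" using t1 by (intro mult_left_mono) auto
    then have 2: "- 2 * t * B \<le> 2 * t * \<bar>B\<bar>" by simp
    have "t\<^sup>2 * A - 2 * t * B + C \<le> - t * K + 2 * t * \<bar>B\<bar> + \<bar>C\<bar>" using 1 2 by linarith
    also have "\<dots> = - t * (\<bar>C\<bar> + 1) + \<bar>C\<bar>" by (simp add: K_def algebra_simps)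
    also have "\<dots> \<le> - (\<bar>C\<bar> + 1) + \<bar>C\<bar>"
      using mult_right_mono[OF t1, of "\<bar>C\<bar> + 1"] by simp
    finally show False using assms[of t] by simp
  qed
  show ?thesis
  proof (cases "A = 0")
    case True
    have "B = 0"
    proof (rule ccontr)
      assume "B \<noteq> 0"
      have "0 \<le> ((C + 1) / (2 * B))\<^sup>2 * A - 2 * ((C + 1) / (2 * B)) * B + C" by (rule assms)
      also have "\<dots> = -1" using \<open>B \<noteq> 0\<close> True by (simp add: field_simps)
      finally show False by simp
    qed
    then show ?thesis using True by simp
  next
    case False
    then have "A > 0" using A0 by simp
    have "0 \<le> (B/A)\<^sup>2 * A - 2 * (B/A) * B + C" by (rule assms)
    also have "\<dots> = (A * C - B\<^sup>2) / A" using \<open>A>0\<close> by (simp add: field_simps power2_eq_square)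
    finally show ?thesis using \<open>A>0\<close> by (simp add: zero_le_divide_iff)
  qed
qed

lemma L2_CS:
  assumes "L2 f" "L2 g"
  shows "(\<integral>x. f x * g x \<partial>lborel)\<^sup>2 \<le> (\<integral>x. (f x)\<^sup>2 \<partial>lborel) * (\<integral>x. (g x)\<^sup>2 \<partial>lborel)"
proof -
  have fg: "integrable lborel (\<lambda>x. f x * g x)" by (rule L2_prod_integrable[OF assms])
  have f2: "integrable lborel (\<lambda>x. (f x)\<^sup>2)" and g2: "integrable lborel (\<lambda>x. (g x)\<^sup>2)"
    using assms by (auto simp: L2_def)
  show ?thesis
  proof (rule discr_lemma)
    fix t
    have "0 \<le> (\<integral>x. (t * f x - g x)\<^sup>2 \<partial>lborel)" by simp
    also have "(\<lambda>x. (t * f x - g x)\<^sup>2) = (\<lambda>x. t\<^sup>2 * (f x)\<^sup>2 - 2 * t * (f x * g x) + (g x)\<^sup>2)"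
      by (auto simp: power2_eq_square algebra_simps)
    also have "(\<integral>x. t\<^sup>2 * (f x)\<^sup>2 - 2 * t * (f x * g x) + (g x)\<^sup>2 \<partial>lborel)
       = t\<^sup>2 * (\<integral>x. (f x)\<^sup>2 \<partial>lborel) - 2 * t * (\<integral>x. f x * g x \<partial>lborel) + (\<integral>x. (g x)\<^sup>2 \<partial>lborel)"
      using fg f2 g2 by simp
    finally show "0 \<le> t\<^sup>2 * (\<integral>x. (f x)\<^sup>2 \<partial>lborel) - 2 * t * (\<integral>x. f x * g x \<partial>lborel) + (\<integral>x. (g x)\<^sup>2 \<partial>lborel)" .
  qed
qed

lemma L2_CS_abs:
  assumes "L2 f" "L2 g"
  shows "\<bar>\<integral>x. f x * g x \<partial>lborel\<bar> \<le> sqrt (\<integral>x. (f x)\<^sup>2 \<partial>lborel) * sqrt (\<integral>x. (g x)\<^sup>2 \<partial>lborel)"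
proof -
  have "\<bar>\<integral>x. f x * g x \<partial>lborel\<bar> = sqrt ((\<integral>x. f x * g x \<partial>lborel)\<^sup>2)" by simp
  also have "\<dots> \<le> sqrt ((\<integral>x. (f x)\<^sup>2 \<partial>lborel) * (\<integral>x. (g x)\<^sup>2 \<partial>lborel))"
    using L2_CS[OF assms] by (rule real_sqrt_le_mono)
  also have "\<dots> = sqrt (\<integral>x. (f x)\<^sup>2 \<partial>lborel) * sqrt (\<integral>x. (g x)\<^sup>2 \<partial>lborel)"
    by (simp add: real_sqrt_mult)
  finally show ?thesis .
qed

lemma L2_indicator:
  fixes a b :: real
  shows "L2 (indicator {a<..b})"
proof -
  have "integrable lborel (indicator {a<..b} :: real \<Rightarrow> real)"
    by (cases "a \<le> b") (auto simp: integrable_indicator_iff)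
  moreover have "(\<lambda>x. (indicator {a<..b} x :: real)\<^sup>2) = indicator {a<..b}"
    by (auto simp: indicator_def)
  ultimately show ?thesis by (auto simp: L2_def)
qed

lemma L2_indicator_Icc:
  fixes a b :: real
  shows "L2 (indicator {a..b})"
proof -
  have "integrable lborel (indicator {a..b} :: real \<Rightarrow> real)"
    by (simp add: integrable_indicator_iff emeasure_lborel_Icc_eq)
  moreover have "(\<lambda>x. (indicator {a..b} x :: real)\<^sup>2) = indicator {a..b}"
    by (auto simp: indicator_def)
  ultimately show ?thesis by (auto simp: L2_def)
qed

lemma L2_interval_integrable:
  assumes "L2 g" shows "integrable lborel (\<lambda>x. g x * indicator {a<..b} x)"
  using L2_prod_integrable[OF assms L2_indicator] .

lemma L2_interval_bound:
  fixes y x :: real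
  assumes "L2 g" "y \<le> x"
  shows "(\<integral>t. g t * indicator {y<..x} t \<partial>lborel)\<^sup>2 \<le> (x - y) * (\<integral>t. (g t)\<^sup>2 \<partial>lborel)"
proof -
  have "(\<integral>t. g t * indicator {y<..x} t \<partial>lborel)\<^sup>2
      \<le> (\<integral>t. (g t)\<^sup>2 \<partial>lborel) * (\<integral>t. (indicator {y<..x} t :: real)\<^sup>2 \<partial>lborel)"
    using L2_CS[OF assms(1) L2_indicator] by simp
  also have "(\<lambda>t. (indicator {y<..x} t :: real)\<^sup>2) = indicator {y<..x}"
    by (auto simp: indicator_def)
  also have "(\<integral>t. indicator {y<..x} t \<partial>lborel) = x - y"
    using assms(2) by simp
  finally show ?thesis by (simp add: mult.commute)
qed

subsection \<open>Test functions\<close>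

lemma test_fun_DERIV: "test_fun \<phi> \<Longrightarrow> (\<phi> has_real_derivative deriv \<phi> x) (at x)"
  unfolding test_fun_def
  by (simp add: DERIV_deriv_iff_real_differentiable differentiable_on_def)

lemma test_fun_cont: "test_fun \<phi> \<Longrightarrow> continuous_on UNIV \<phi>"
  unfolding test_fun_def using differentiable_imp_continuous_on by blast

lemma test_fun_cont_deriv: "test_fun \<phi> \<Longrightarrow> continuous_on UNIV (deriv \<phi>)"
  unfolding test_fun_def by blast

lemma test_fun_supp:
  assumes "test_fun \<phi>"
  obtains R where "R > 0" "\<And>x. R < \<bar>x\<bar> \<Longrightarrow> \<phi> x = 0" "\<And>x. R < \<bar>x\<bar> \<Longrightarrow> deriv \<phi> x = 0"
proof -
  obtain R0 where R0: "\<And>x. R0 < \<bar>x\<bar> \<Longrightarrow> \<phi> x = 0" using assms by (auto simp: test_fun_def)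
  define R where "R = \<bar>R0\<bar> + 1"
  have "deriv \<phi> x = 0" if "R < \<bar>x\<bar>" for x
  proof -
    have "((\<lambda>_. 0) has_real_derivative 0) (at x)" by simp
    then have "(\<phi> has_real_derivative 0) (at x)"
    proof (rule has_field_derivative_transform_within_open[where S="{t. R0 < \<bar>t\<bar>}"])
      show "open {t::real. R0 < \<bar>t\<bar>}"
        by (intro open_Collect_less continuous_intros)
      show "x \<in> {t. R0 < \<bar>t\<bar>}" using that by (simp add: R_def)
      show "\<And>t. t \<in> {t. R0 < \<bar>t\<bar>} \<Longrightarrow> 0 = \<phi> t" using R0 by auto
    qed
    then show ?thesis using DERIV_imp_deriv by blast
  qed
  moreover have "\<phi> x = 0" if "R < \<bar>x\<bar>" for x using R0 that by (simp add: R_def)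
  ultimately show ?thesis using that[of R] by (simp add: R_def)
qed

lemma cont_supp_integrable:
  fixes h :: "real \<Rightarrow> real"
  assumes "continuous_on UNIV h" "\<And>x. R < \<bar>x\<bar> \<Longrightarrow> h x = 0"
  shows "integrable lborel h"
proof -
  have "set_integrable lborel {-R..R} h"
    by (rule borel_integrable_atLeastAtMost') (rule continuous_on_subset[OF assms(1)], simp)
  then have "integrable lborel (\<lambda>x. indicator {-R..R} x *\<^sub>R h x)" by (simp add: set_integrable_def)
  moreover have "(\<lambda>x. indicator {-R..R} x *\<^sub>R h x) = h"
    using assms(2) by (force simp: indicator_def abs_le_iff)
  ultimately show ?thesis by simp
qed

lemma cont_supp_L2:
  fixes h :: "real \<Rightarrow> real"
  assumes "continuous_on UNIV h" "\<And>x. R < \<bar>x\<bar> \<Longrightarrow> h x = 0"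
  shows "L2 h"
proof -
  have "integrable lborel (\<lambda>x. (h x)\<^sup>2)"
    by (rule cont_supp_integrable[where R=R]) (auto intro!: continuous_intros assms)
  moreover have "h \<in> borel_measurable lborel"
    using borel_measurable_continuous_onI[OF assms(1)] by simp
  ultimately show ?thesis by (simp add: L2_def)
qed

lemma test_fun_L2: assumes "test_fun \<phi>" shows "L2 \<phi>"
proof -
  obtain R where "\<And>x. R < \<bar>x\<bar> \<Longrightarrow> \<phi> x = 0" using test_fun_supp[OF assms] by blast
  then show ?thesis using cont_supp_L2 test_fun_cont[OF assms] by blast
qed

lemma test_fun_L2_deriv: assumes "test_fun \<phi>" shows "L2 (deriv \<phi>)"
proof -
  obtain R where "\<And>x. R < \<bar>x\<bar> \<Longrightarrow> deriv \<phi> x = 0" using test_fun_supp[OF assms] by blast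
  then show ?thesis using cont_supp_L2 test_fun_cont_deriv[OF assms] by blast
qed

lemma weak_deriv_lin:
  assumes "weak_deriv u g" "weak_deriv v h" "L2 u" "L2 v" "L2 g" "L2 h"
  shows "weak_deriv (\<lambda>x. c * u x + d * v x) (\<lambda>x. c * g x + d * h x)"
  unfolding weak_deriv_def
proof (intro conjI allI impI)
  show "(\<lambda>x. c * g x + d * h x) \<in> borel_measurable lborel"
    using assms by (auto simp: L2_def)
  fix \<phi> assume \<phi>: "test_fun \<phi>"
  have i1: "integrable lborel (\<lambda>x. u x * deriv \<phi> x)" "integrable lborel (\<lambda>x. v x * deriv \<phi> x)"
    using L2_prod_integrable test_fun_L2_deriv[OF \<phi>] assms by auto
  have i2: "integrable lborel (\<lambda>x. g x * \<phi> x)" "integrable lborel (\<lambda>x. h x * \<phi> x)"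
    using L2_prod_integrable test_fun_L2[OF \<phi>] assms by auto
  have e1: "integral\<^sup>L lborel (\<lambda>x. u x * deriv \<phi> x) = - integral\<^sup>L lborel (\<lambda>x. g x * \<phi> x)"
    using assms(1) \<phi> by (simp add: weak_deriv_def)
  have e2: "integral\<^sup>L lborel (\<lambda>x. v x * deriv \<phi> x) = - integral\<^sup>L lborel (\<lambda>x. h x * \<phi> x)"
    using assms(2) \<phi> by (simp add: weak_deriv_def)
  have "integral\<^sup>L lborel (\<lambda>x. (c * u x + d * v x) * deriv \<phi> x)
      = integral\<^sup>L lborel (\<lambda>x. c * (u x * deriv \<phi> x) + d * (v x * deriv \<phi> x))"
    by (simp add: algebra_simps)
  also have "\<dots> = c * integral\<^sup>L lborel (\<lambda>x. u x * deriv \<phi> x) + d * integral\<^sup>L lborel (\<lambda>x. v x * deriv \<phi> x)"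
    using i1 by simp
  also have "\<dots> = - (c * integral\<^sup>L lborel (\<lambda>x. g x * \<phi> x) + d * integral\<^sup>L lborel (\<lambda>x. h x * \<phi> x))"
    using e1 e2 by simp
  also have "c * integral\<^sup>L lborel (\<lambda>x. g x * \<phi> x) + d * integral\<^sup>L lborel (\<lambda>x. h x * \<phi> x)
      = integral\<^sup>L lborel (\<lambda>x. c * (g x * \<phi> x) + d * (h x * \<phi> x))"
    using i2 by simp
  also have "\<dots> = integral\<^sup>L lborel (\<lambda>x. (c * g x + d * h x) * \<phi> x)"
    by (simp add: algebra_simps)
  finally show "integral\<^sup>L lborel (\<lambda>x. (c * u x + d * v x) * deriv \<phi> x) =
      - integral\<^sup>L lborel (\<lambda>x. (c * g x + d * h x) * \<phi> x)" .
qed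

subsection \<open>A smooth step and bump functions\<close>

definition clamp :: "real \<Rightarrow> real" where "clamp t = max 0 (min 1 t)"
definition sst :: "real \<Rightarrow> real" where "sst t = 3 * (clamp t)\<^sup>2 - 2 * (clamp t) ^ 3"
definition dsst :: "real \<Rightarrow> real" where "dsst t = 6 * clamp t * (1 - clamp t)"

lemma clamp_cont: "continuous_on UNIV clamp"
  unfolding clamp_def by (intro continuous_intros)

lemma dsst_cont: "continuous_on UNIV dsst"
  unfolding dsst_def by (intro continuous_intros clamp_cont[THEN continuous_on_subset]) auto

lemma sst_le0: "t \<le> 0 \<Longrightarrow> sst t = 0" by (simp add: sst_def clamp_def)
lemma sst_ge1: "1 \<le> t \<Longrightarrow> sst t = 1" by (simp add: sst_def clamp_def)
lemma dsst_le0: "t \<le> 0 \<Longrightarrow> dsst t = 0" by (simp add: dsst_def clamp_def)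
lemma dsst_ge1: "1 \<le> t \<Longrightarrow> dsst t = 0" by (simp add: dsst_def clamp_def)
lemma dsst_nonneg: "0 \<le> dsst t" by (simp add: dsst_def clamp_def)

lemma sst_range: "0 \<le> sst t \<and> sst t \<le> 1"
proof -
  define c where "c = clamp t"
  have c: "0 \<le> c" "c \<le> 1" by (auto simp: c_def clamp_def)
  have "sst t = c\<^sup>2 * (3 - 2 * c)" by (simp add: sst_def c_def power2_eq_square power3_eq_cube algebra_simps)
  moreover have "1 - c\<^sup>2 * (3 - 2 * c) = (1 - c)\<^sup>2 * (1 + 2 * c)"
    by (simp add: power2_eq_square algebra_simps)
  moreover have "0 \<le> (1 - c)\<^sup>2 * (1 + 2 * c)" using c by simp
  moreover have "0 \<le> c\<^sup>2 * (3 - 2 * c)" using c by simp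
  ultimately show ?thesis by linarith
qed

lemma deriv0_quad:
  fixes f :: "real \<Rightarrow> real"
  assumes "\<And>h. \<bar>f (x + h) - f x\<bar> \<le> C * h\<^sup>2"
  shows "(f has_real_derivative 0) (at x)"
proof -
  have "((\<lambda>h. (f (x + h) - f x) / h) \<longlongrightarrow> 0) (at 0)"
  proof (rule Lim_null_comparison)
    show "\<forall>\<^sub>F h in at 0. norm ((f (x + h) - f x) / h) \<le> C * \<bar>h\<bar>"
    proof (rule eventually_at_filter[THEN iffD2], rule always_eventually, intro allI impI)
      fix h :: real assume "h \<noteq> 0"
      have "norm ((f (x + h) - f x) / h) = \<bar>f (x + h) - f x\<bar> / \<bar>h\<bar>" by (simp add: abs_divide)
      also have "\<dots> \<le> C * h\<^sup>2 / \<bar>h\<bar>" using assms[of h] \<open>h\<noteq>0\<close> by (intro divide_right_mono) auto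
      also have "C * h\<^sup>2 / \<bar>h\<bar> = C * \<bar>h\<bar>" using \<open>h\<noteq>0\<close>
        by (cases "h < 0") (auto simp: power2_eq_square field_simps)
      finally show "norm ((f (x + h) - f x) / h) \<le> C * \<bar>h\<bar>" .
    qed
    show "((\<lambda>h. C * \<bar>h\<bar>) \<longlongrightarrow> 0) (at (0::real))"
      by (intro tendsto_mult_right_zero tendsto_rabs_zero tendsto_ident_at)
  qed
  then show ?thesis by (simp add: DERIV_def)
qed

lemma sst_quad0: "\<bar>sst (0 + h) - sst 0\<bar> \<le> 3 * h\<^sup>2"
proof -
  have s0: "sst 0 = 0" by (simp add: sst_le0)
  consider "h \<le> 0" | "1 \<le> h" | "0 < h" "h < 1" by linarith
  then show ?thesis
  proof cases
    case 1 then show ?thesis by (simp add: sst_le0)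
  next
    case 2
    then have "1 \<le> h\<^sup>2" by (metis one_le_power)
    moreover have "sst (0 + h) = 1" using 2 by (simp add: sst_ge1)
    ultimately show ?thesis using s0 by linarith
  next
    case 3
    then have c: "clamp h = h" by (simp add: clamp_def)
    have "sst h = 3 * h\<^sup>2 - 2 * h ^ 3" by (simp add: sst_def c)
    moreover have "0 \<le> h ^ 3" using 3 by simp
    moreover have "h ^ 3 \<le> h\<^sup>2" using 3 by (simp add: power_decreasing)
    moreover have "0 \<le> h\<^sup>2" by simp
    ultimately have "0 \<le> 3 * h\<^sup>2 - 2 * h ^ 3" by linarith
    then have "\<bar>sst (0 + h) - sst 0\<bar> = 3 * h\<^sup>2 - 2 * h ^ 3" using s0 \<open>sst h = _\<close> by simp
    then show ?thesis using \<open>0 \<le> h ^ 3\<close> by linarith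
  qed
qed

lemma sst_quad1: "\<bar>sst (1 + h) - sst 1\<bar> \<le> 3 * h\<^sup>2"
proof -
  have s1: "sst 1 = 1" by (simp add: sst_ge1)
  consider "0 \<le> h" | "h \<le> -1" | "-1 < h" "h < 0" by linarith
  then show ?thesis
  proof cases
    case 1 then show ?thesis by (simp add: sst_ge1)
  next
    case 2
    then have "1 \<le> \<bar>h\<bar>" by simp
    then have "1 \<le> \<bar>h\<bar>\<^sup>2" by (metis one_le_power)
    then have "1 \<le> h\<^sup>2" by simp
    moreover have "sst (1 + h) = 0" using 2 by (simp add: sst_le0)
    ultimately show ?thesis using s1 by linarith
  next
    case 3
    then have c: "clamp (1 + h) = 1 + h" by (simp add: clamp_def)
    have "sst (1 + h) - 1 = - (h\<^sup>2 * (3 + 2 * h))"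
      by (simp add: sst_def c power2_eq_square power3_eq_cube algebra_simps)
    moreover have "0 \<le> h\<^sup>2 * (3 + 2 * h)" using 3 by simp
    moreover have "h\<^sup>2 * h \<le> 0" using 3 by (simp add: mult_nonneg_nonpos)
    moreover have "h\<^sup>2 * (3 + 2 * h) = 3 * h\<^sup>2 + 2 * (h\<^sup>2 * h)" by (simp add: algebra_simps)
    ultimately have "\<bar>sst (1 + h) - sst 1\<bar> = 3 * h\<^sup>2 + 2 * (h\<^sup>2 * h)" using s1 by simp
    then show ?thesis using \<open>h\<^sup>2 * h \<le> 0\<close> by linarith
  qed
qed

lemma sst_deriv: "(sst has_real_derivative dsst t) (at t)"
proof -
  consider "t < 0" | "t = 0" | "0 < t" "t < 1" | "t = 1" | "1 < t" by linarith
  then show ?thesis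
  proof cases
    case 1
    have "((\<lambda>_. 0) has_real_derivative 0) (at t)" by simp
    then have "(sst has_real_derivative 0) (at t)"
      by (rule has_field_derivative_transform_within_open[where S="{..<0}"])
         (use 1 in \<open>auto simp: sst_le0\<close>)
    then show ?thesis using 1 by (simp add: dsst_le0)
  next
    case 2
    have "(sst has_real_derivative 0) (at 0)"
      by (rule deriv0_quad[where C=3]) (rule sst_quad0)
    then show ?thesis using 2 by (simp add: dsst_le0)
  next
    case 3
    have "((\<lambda>s. 3 * s\<^sup>2 - 2 * s ^ 3) has_real_derivative 3 * (2 * t) - 2 * (3 * t\<^sup>2)) (at t)"
      by (auto intro!: derivative_eq_intros simp: power2_eq_square)
    then have "(sst has_real_derivative 3 * (2 * t) - 2 * (3 * t\<^sup>2)) (at t)"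
      by (rule has_field_derivative_transform_within_open[where S="{0<..<1}"])
         (use 3 in \<open>auto simp: sst_def clamp_def\<close>)
    moreover have "dsst t = 3 * (2 * t) - 2 * (3 * t\<^sup>2)"
      using 3 by (simp add: dsst_def clamp_def power2_eq_square algebra_simps)
    ultimately show ?thesis by simp
  next
    case 4
    have "(sst has_real_derivative 0) (at 1)"
      by (rule deriv0_quad[where C=3]) (rule sst_quad1)
    then show ?thesis using 4 by (simp add: dsst_ge1)
  next
    case 5
    have "((\<lambda>_. 1) has_real_derivative 0) (at t)" by simp
    then have "(sst has_real_derivative 0) (at t)"
      by (rule has_field_derivative_transform_within_open[where S="{1<..}"])
         (use 5 in \<open>auto simp: sst_ge1\<close>)
    then show ?thesis using 5 by (simp add: dsst_ge1)
  qed
qed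

definition bmp :: "real \<Rightarrow> real \<Rightarrow> real \<Rightarrow> real \<Rightarrow> real" where
  "bmp y x e t = sst ((t - y) / e) - sst ((t - x) / e)"
definition dbmp :: "real \<Rightarrow> real \<Rightarrow> real \<Rightarrow> real \<Rightarrow> real" where
  "dbmp y x e t = dsst ((t - y) / e) / e - dsst ((t - x) / e) / e"

lemma sst_comp_deriv:
  "((\<lambda>t. sst ((t - z) / e)) has_real_derivative dsst ((t - z) / e) / e) (at t)"
proof -
  have "((\<lambda>t. t - z) has_real_derivative 1) (at t)"
    by (auto intro!: derivative_eq_intros)
  from DERIV_cdivide[OF this, of e]
  have "((\<lambda>t. (t - z) / e) has_real_derivative 1 / e) (at t)" by simp
  from DERIV_chain[OF sst_deriv this] show ?thesis by (simp add: o_def)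
qed

lemma bmp_deriv: "(bmp y x e has_real_derivative dbmp y x e t) (at t)"
  unfolding bmp_def dbmp_def by (intro DERIV_diff sst_comp_deriv)

lemma deriv_bmp: "deriv (bmp y x e) = dbmp y x e"
  using bmp_deriv DERIV_imp_deriv by blast

lemma dbmp_cont: "continuous_on UNIV (dbmp y x e)"
proof (cases "e = 0")
  case True then show ?thesis by (simp add: dbmp_def)
next
  case False then show ?thesis unfolding dbmp_def
    by (intro continuous_intros continuous_on_compose2[OF dsst_cont]) auto
qed

lemma bmp_cont: "continuous_on UNIV (bmp y x e)"
  by (intro continuous_at_imp_continuous_on ballI DERIV_isCont[OF bmp_deriv])

lemma bmp_abs: "\<bar>bmp y x e t\<bar> \<le> 1"
  using sst_range[of "(t - y) / e"] sst_range[of "(t - x) / e"] unfolding bmp_def abs_le_iff by linarith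

lemma bmp_zero_left: "0 < e \<Longrightarrow> t \<le> y \<Longrightarrow> t \<le> x \<Longrightarrow> bmp y x e t = 0"
  by (simp add: bmp_def sst_le0 divide_nonpos_pos)

lemma bmp_zero_right: "0 < e \<Longrightarrow> y + e \<le> t \<Longrightarrow> x + e \<le> t \<Longrightarrow> bmp y x e t = 0"
  by (simp add: bmp_def sst_ge1 le_divide_eq)

lemma dbmp_zero: assumes "0 < e" "t < min y x \<or> t > max y x + e" shows "dbmp y x e t = 0"
  using assms
  by (auto simp: dbmp_def dsst_le0 dsst_ge1 divide_nonpos_pos le_divide_eq)

lemma bmp_test: assumes "0 < e" shows "test_fun (bmp y x e)"
  unfolding test_fun_def
proof (intro conjI)
  show "bmp y x e differentiable_on UNIV"
    unfolding differentiable_on_def real_differentiable_def using bmp_deriv by blast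
  show "continuous_on UNIV (deriv (bmp y x e))" by (simp add: deriv_bmp dbmp_cont)
  show "\<exists>R. \<forall>t. R < \<bar>t\<bar> \<longrightarrow> bmp y x e t = 0"
  proof (intro exI allI impI)
    fix t assume "\<bar>y\<bar> + \<bar>x\<bar> + e < \<bar>t\<bar>"
    then consider "t < - (\<bar>y\<bar> + \<bar>x\<bar> + e)" | "t > \<bar>y\<bar> + \<bar>x\<bar> + e" by linarith
    then show "bmp y x e t = 0"
    proof cases
      case 1 then show ?thesis using assms by (intro bmp_zero_left) auto
    next
      case 2 then show ?thesis using assms by (intro bmp_zero_right) auto
    qed
  qed
qed

definition en :: "nat \<Rightarrow> real" where "en n = 1 / real (Suc n)"

lemma en_pos: "0 < en n" by (simp add: en_def)
lemma en_le1: "en n \<le> 1" by (simp add: en_def)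

lemma en_small: assumes "0 < d" shows "\<forall>\<^sub>F n in sequentially. en n < d"
proof -
  obtain N where N: "inverse (real (Suc N)) < d" using reals_Archimedean[OF assms] by blast
  show ?thesis
  proof (rule eventually_sequentiallyI[of N])
    fix n assume "N \<le> n"
    then have "en n \<le> inverse (real (Suc N))"
      by (simp add: en_def inverse_eq_divide frac_le)
    then show "en n < d" using N by simp
  qed
qed

lemma bmp_pointwise:
  assumes "y \<le> x"
  shows "(\<lambda>n. bmp y x (en n) t) \<longlonglongrightarrow> indicator {y<..x} t"
proof -
  consider "t \<le> y" | "y < t" "t \<le> x" | "x < t" by linarith
  then have "\<forall>\<^sub>F n in sequentially. indicator {y<..x} t = bmp y x (en n) t"
  proof cases
    case 1
    then show ?thesis using assms by (auto intro!: always_eventually simp: bmp_zero_left en_pos)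
  next
    case 2
    have ev: "\<forall>\<^sub>F n in sequentially. en n < t - y" using 2 by (intro en_small) simp
    show ?thesis using ev
    proof (rule eventually_mono)
      fix n assume "en n < t - y"
      then have "1 \<le> (t - y) / en n" using en_pos[of n] by (simp add: le_divide_eq)
      moreover have "(t - x) / en n \<le> 0" using 2 en_pos[of n] by (simp add: divide_nonpos_pos)
      ultimately show "indicator {y<..x} t = bmp y x (en n) t"
        using 2 by (simp add: bmp_def sst_ge1 sst_le0)
    qed
  next
    case 3
    have ev: "\<forall>\<^sub>F n in sequentially. en n < t - x" using 3 by (intro en_small) simp
    show ?thesis using ev
    proof (rule eventually_mono)
      fix n assume "en n < t - x"
      then show "indicator {y<..x} t = bmp y x (en n) t"
        using 3 assms by (subst bmp_zero_right) (auto simp: en_pos)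
    qed
  qed
  then show ?thesis by (rule Lim_transform_eventually[OF tendsto_const])
qed

lemma L2_abs: assumes "L2 g" shows "L2 (\<lambda>x. \<bar>g x\<bar>)"
proof -
  have "g \<in> borel_measurable lborel" using assms by (simp add: L2_def)
  then have "(\<lambda>x. \<bar>g x\<bar>) \<in> borel_measurable lborel" by measurable
  then show ?thesis using assms by (simp add: L2_def)
qed

lemma bump_limit_g:
  assumes "L2 g" "y \<le> x"
  shows "(\<lambda>n. \<integral>t. g t * bmp y x (en n) t \<partial>lborel) \<longlonglongrightarrow> (\<integral>t. g t * indicator {y<..x} t \<partial>lborel)"
proof (rule integral_dominated_convergence[where w="\<lambda>t. \<bar>g t\<bar> * indicator {y..x+1} t"])
  have gm: "g \<in> borel_measurable lborel" using assms by (simp add: L2_def)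
  show "(\<lambda>t. g t * indicator {y<..x} t) \<in> borel_measurable lborel" using gm by measurable
  show "(\<lambda>t. g t * bmp y x (en n) t) \<in> borel_measurable lborel" for n
    using gm borel_measurable_continuous_onI[OF bmp_cont] by simp
  show "integrable lborel (\<lambda>t. \<bar>g t\<bar> * indicator {y..x+1} t)"
    using L2_prod_integrable[OF L2_abs[OF assms(1)] L2_indicator_Icc] .
  show "AE t in lborel. (\<lambda>n. g t * bmp y x (en n) t) \<longlonglongrightarrow> g t * indicator {y<..x} t"
    by (intro AE_I2 tendsto_mult tendsto_const bmp_pointwise assms(2))
  show "AE t in lborel. norm (g t * bmp y x (en n) t) \<le> \<bar>g t\<bar> * indicator {y..x+1} t" for n
  proof (rule AE_I2)
    fix t
    show "norm (g t * bmp y x (en n) t) \<le> \<bar>g t\<bar> * indicator {y..x+1} t"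
    proof (cases "t \<in> {y..x+1}")
      case True
      then show ?thesis using bmp_abs[of y x "en n" t]
        by (simp add: abs_mult mult_left_le)
    next
      case False
      then consider "t < y" | "x + 1 < t" by auto
      then have "bmp y x (en n) t = 0"
      proof cases
        case 1 then show ?thesis using assms(2) by (intro bmp_zero_left) (auto simp: en_pos)
      next
        case 2 then show ?thesis using assms(2) en_le1[of n] by (intro bmp_zero_right) (auto simp: en_pos)
      qed
      then show ?thesis by simp
    qed
  qed
qed

definition rho :: "real \<Rightarrow> real \<Rightarrow> real \<Rightarrow> real" where
  "rho z e t = dsst ((t - z) / e) / e"

lemma rho_nonneg: "0 < e \<Longrightarrow> 0 \<le> rho z e t"
  by (simp add: rho_def dsst_nonneg)

lemma rho_zero: "0 < e \<Longrightarrow> t \<notin> {z..z+e} \<Longrightarrow> rho z e t = 0"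
  by (auto simp: rho_def dsst_le0 dsst_ge1 divide_nonpos_pos le_divide_eq not_le)

lemma rho_zero_abs: assumes "0 < e" "\<bar>z\<bar> + e < \<bar>t\<bar>" shows "rho z e t = 0"
proof (rule rho_zero[OF assms(1)])
  show "t \<notin> {z..z+e}"
  proof
    assume "t \<in> {z..z+e}"
    then have "z \<le> t" "t \<le> z + e" by auto
    moreover have "- \<bar>z\<bar> \<le> z" "z \<le> \<bar>z\<bar>" by auto
    ultimately have "\<bar>t\<bar> \<le> \<bar>z\<bar> + e" using assms(1) unfolding abs_le_iff by linarith
    then show False using assms(2) by simp
  qed
qed

lemma rho_cont: "0 < e \<Longrightarrow> continuous_on UNIV (rho z e)"
  unfolding rho_def by (intro continuous_intros continuous_on_compose2[OF dsst_cont]) auto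

lemma rho_integral: assumes "0 < e" shows "(\<integral>t. rho z e t \<partial>lborel) = 1"
proof -
  have "(\<integral>t. indicator {z..z+e} t *\<^sub>R rho z e t \<partial>lborel) = sst ((z + e - z) / e) - sst ((z - z) / e)"
  proof (rule integral_FTC_atLeastAtMost)
    show "z \<le> z + e" using assms by simp
    show "continuous_on {z..z+e} (rho z e)" using rho_cont[OF assms] continuous_on_subset by blast
    fix t
    show "((\<lambda>t. sst ((t - z) / e)) has_vector_derivative rho z e t) (at t within {z..z+e})"
      using sst_comp_deriv[of z e t]
      by (simp add: rho_def has_real_derivative_iff_has_vector_derivative[symmetric] has_field_derivative_at_within)
  qed
  also have "\<dots> = 1" using assms by (simp add: sst_ge1 sst_le0)
  also have "(\<lambda>t. indicator {z..z+e} t *\<^sub>R rho z e t) = rho z e"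
    using rho_zero[OF assms] by (auto simp: indicator_def fun_eq_iff)
  finally show ?thesis .
qed

lemma rho_integrable: assumes "0 < e" shows "integrable lborel (rho z e)"
  by (rule cont_supp_integrable[OF rho_cont[OF assms], where R="\<bar>z\<bar> + e"])
     (rule rho_zero_abs[OF assms])

lemma u_rho_integrable:
  assumes "0 < e" "continuous_on UNIV u"
  shows "integrable lborel (\<lambda>t. u t * rho z e t)"
  by (rule cont_supp_integrable[where R="\<bar>z\<bar> + e"])
     (auto intro!: continuous_intros assms(2) rho_cont[OF assms(1)] simp: rho_zero_abs[OF assms(1)])

lemma A_limit:
  assumes "continuous_on UNIV u"
  shows "(\<lambda>n. \<integral>t. u t * rho z (en n) t \<partial>lborel) \<longlonglongrightarrow> u z"
proof (rule LIMSEQ_I)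
  fix r :: real assume "0 < r"
  have "isCont u z" using assms by (simp add: continuous_on_eq_continuous_at)
  then obtain d where "d > 0" and d: "\<And>t. dist t z < d \<Longrightarrow> dist (u t) (u z) < r / 2"
    using \<open>0 < r\<close> unfolding continuous_at_eps_delta by (metis half_gt_zero)
  obtain N where N: "\<forall>n\<ge>N. en n < d" using en_small[OF \<open>d>0\<close>] by (auto simp: eventually_sequentially)
  show "\<exists>no. \<forall>n\<ge>no. norm ((\<integral>t. u t * rho z (en n) t \<partial>lborel) - u z) < r"
  proof (intro exI allI impI)
    fix n assume "N \<le> n"
    define e where "e = en n"
    have e: "0 < e" "e < d" using N \<open>N \<le> n\<close> by (auto simp: e_def en_pos)
    have i1: "integrable lborel (\<lambda>t. u t * rho z e t)" by (rule u_rho_integrable[OF e(1) assms])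
    have i2: "integrable lborel (rho z e)" by (rule rho_integrable[OF e(1)])
    have "(\<integral>t. u t * rho z e t \<partial>lborel) - u z = (\<integral>t. u t * rho z e t \<partial>lborel) - u z * (\<integral>t. rho z e t \<partial>lborel)"
      using rho_integral[OF e(1)] by simp
    also have "\<dots> = (\<integral>t. (u t - u z) * rho z e t \<partial>lborel)"
      using i1 i2 by (simp add: left_diff_distrib)
    finally have eq: "(\<integral>t. u t * rho z e t \<partial>lborel) - u z = (\<integral>t. (u t - u z) * rho z e t \<partial>lborel)" .
    have "\<bar>\<integral>t. (u t - u z) * rho z e t \<partial>lborel\<bar> \<le> (\<integral>t. \<bar>(u t - u z) * rho z e t\<bar> \<partial>lborel)"
      by (rule integral_abs_bound)
    also have "\<dots> \<le> (\<integral>t. r / 2 * rho z e t \<partial>lborel)"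
    proof (rule integral_mono)
      show "integrable lborel (\<lambda>t. \<bar>(u t - u z) * rho z e t\<bar>)"
        using i1 i2 by (intro integrable_abs) (simp add: left_diff_distrib)
      show "integrable lborel (\<lambda>t. r / 2 * rho z e t)" using i2 by simp
      fix t
      show "\<bar>(u t - u z) * rho z e t\<bar> \<le> r / 2 * rho z e t"
      proof (cases "t \<in> {z..z+e}")
        case True
        then have "dist t z < d" using e by (simp add: dist_real_def)
        then have "\<bar>u t - u z\<bar> < r / 2" using d by (simp add: dist_real_def)
        then have "\<bar>u t - u z\<bar> * rho z e t \<le> r / 2 * rho z e t"
          using rho_nonneg[OF e(1), of z t] by (intro mult_right_mono) auto
        then show ?thesis using rho_nonneg[OF e(1), of z t] by (simp add: abs_mult)
      next
        case False then show ?thesis using rho_zero[OF e(1) False] by simp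
      qed
    qed
    also have "\<dots> = r / 2" using rho_integral[OF e(1)] by simp
    finally show "norm ((\<integral>t. u t * rho z (en n) t \<partial>lborel) - u z) < r"
      using eq \<open>0 < r\<close> by (simp add: e_def)
  qed
qed

lemma dbmp_rho: "dbmp y x e t = rho y e t - rho x e t"
  by (simp add: dbmp_def rho_def)

lemma bump_limit_u:
  assumes "continuous_on UNIV u"
  shows "(\<lambda>n. \<integral>t. u t * dbmp y x (en n) t \<partial>lborel) \<longlonglongrightarrow> u y - u x"
proof -
  have "(\<integral>t. u t * dbmp y x (en n) t \<partial>lborel)
      = (\<integral>t. u t * rho y (en n) t \<partial>lborel) - (\<integral>t. u t * rho x (en n) t \<partial>lborel)" for n
    using u_rho_integrable[OF en_pos assms, of y n] u_rho_integrable[OF en_pos assms, of x n]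
    by (simp add: dbmp_rho right_diff_distrib)
  then show ?thesis using tendsto_diff[OF A_limit[OF assms, of y] A_limit[OF assms, of x]] by simp
qed

theorem weak_deriv_FTC:
  assumes "weak_deriv u g" "continuous_on UNIV u" "L2 g" "y \<le> x"
  shows "u x - u y = (\<integral>t. g t * indicator {y<..x} t \<partial>lborel)"
proof -
  have "(\<integral>t. u t * dbmp y x (en n) t \<partial>lborel) = - (\<integral>t. g t * bmp y x (en n) t \<partial>lborel)" for n
  proof -
    have "(\<integral>t. u t * deriv (bmp y x (en n)) t \<partial>lborel) = - (\<integral>t. g t * bmp y x (en n) t \<partial>lborel)"
      using assms(1) bmp_test[OF en_pos, of y x n] unfolding weak_deriv_def by blast
    then show ?thesis by (simp only: deriv_bmp)
  qed
  then have "(\<lambda>n. - (\<integral>t. g t * bmp y x (en n) t \<partial>lborel)) \<longlonglongrightarrow> u y - u x"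
    using bump_limit_u[OF assms(2), of y x] by simp
  moreover have "(\<lambda>n. - (\<integral>t. g t * bmp y x (en n) t \<partial>lborel)) \<longlonglongrightarrow> - (\<integral>t. g t * indicator {y<..x} t \<partial>lborel)"
    by (intro tendsto_minus bump_limit_g assms)
  ultimately have "u y - u x = - (\<integral>t. g t * indicator {y<..x} t \<partial>lborel)"
    using LIMSEQ_unique by blast
  then show ?thesis by simp
qed

lemma emeasure_density_real:
  fixes f :: "real \<Rightarrow> real"
  assumes "integrable lborel f" "\<And>t. 0 \<le> f t" "A \<in> sets borel"
  shows "emeasure (density lborel (\<lambda>t. ennreal (f t))) A = ennreal (\<integral>t. f t * indicator A t \<partial>lborel)"
proof -
  have fm: "f \<in> borel_measurable lborel" using assms(1) by (rule borel_measurable_integrable)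
  have "emeasure (density lborel (\<lambda>t. ennreal (f t))) A = (\<integral>\<^sup>+ t. ennreal (f t) * indicator A t \<partial>lborel)"
    by (rule emeasure_density) (use fm assms(3) in auto)
  also have "\<dots> = (\<integral>\<^sup>+ t. ennreal (f t * indicator A t) \<partial>lborel)"
    by (intro nn_integral_cong) (auto simp: indicator_def)
  also have "\<dots> = ennreal (\<integral>t. f t * indicator A t \<partial>lborel)"
  proof (rule nn_integral_eq_integral)
    show "integrable lborel (\<lambda>t. f t * indicator A t)"
      using integrable_real_mult_indicator[of A lborel f] assms by simp
    show "AE t in lborel. 0 \<le> f t * indicator A t"
      using assms(2) by (auto simp: indicator_def)
  qed
  finally show ?thesis .
qed

lemma zero_on_intervals_AE:
  assumes h: "L2 h" and I0: "\<And>y x. y \<le> x \<Longrightarrow> (\<integral>t. h t * indicator {y<..x} t \<partial>lborel) = 0"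
  shows "AE t in lborel. h t = 0"
proof -
  have hm: "h \<in> borel_measurable lborel" using h by (simp add: L2_def)
  have loc: "AE t in lborel. t \<in> {- real N<..real N} \<longrightarrow> h t = 0" for N :: nat
  proof -
    define I where "I = {- real N<..real N}"
    define f1 where "f1 t = max 0 (h t) * indicator I t" for t
    define f2 where "f2 t = max 0 (- h t) * indicator I t" for t
    have hI: "integrable lborel (\<lambda>t. h t * indicator I t)" unfolding I_def by (rule L2_interval_integrable[OF h])
    have f1i: "integrable lborel f1"
    proof (rule Bochner_Integration.integrable_bound[OF integrable_abs[OF hI]])
      show "f1 \<in> borel_measurable lborel" unfolding f1_def I_def using hm by measurable
      show "AE t in lborel. norm (f1 t) \<le> norm \<bar>h t * indicator I t\<bar>"
        by (auto simp: f1_def indicator_def)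
    qed
    have f2i: "integrable lborel f2"
    proof (rule Bochner_Integration.integrable_bound[OF integrable_abs[OF hI]])
      show "f2 \<in> borel_measurable lborel" unfolding f2_def I_def using hm by measurable
      show "AE t in lborel. norm (f2 t) \<le> norm \<bar>h t * indicator I t\<bar>"
        by (auto simp: f2_def indicator_def)
    qed
    have f1p: "0 \<le> f1 t" and f2p: "0 \<le> f2 t" for t by (auto simp: f1_def f2_def indicator_def)
    have eqA: "(\<integral>t. f1 t * indicator A t \<partial>lborel) = (\<integral>t. f2 t * indicator A t \<partial>lborel)"
      if A: "A \<in> sets borel" for A
    proof -
      define M1 where "M1 = density lborel (\<lambda>t. ennreal (f1 t))"
      define M2 where "M2 = density lborel (\<lambda>t. ennreal (f2 t))"
      have "M1 = M2"
      proof (rule measure_eqI_lessThan)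
        show "sets M1 = sets borel" "sets M2 = sets borel" by (simp_all add: M1_def M2_def)
        fix x :: real
        have e1: "emeasure M1 {x<..} = ennreal (\<integral>t. f1 t * indicator {x<..} t \<partial>lborel)"
          unfolding M1_def by (rule emeasure_density_real[OF f1i f1p]) simp
        have e2: "emeasure M2 {x<..} = ennreal (\<integral>t. f2 t * indicator {x<..} t \<partial>lborel)"
          unfolding M2_def by (rule emeasure_density_real[OF f2i f2p]) simp
        show "emeasure M1 {x<..} < \<infinity>" using e1 by simp
        define y' where "y' = min (real N) (max x (- real N))"
        have "(\<integral>t. f1 t * indicator {x<..} t \<partial>lborel) - (\<integral>t. f2 t * indicator {x<..} t \<partial>lborel)
            = (\<integral>t. f1 t * indicator {x<..} t - f2 t * indicator {x<..} t \<partial>lborel)"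
          using f1i f2i by (simp add: integrable_real_mult_indicator)
        also have "\<dots> = (\<integral>t. h t * indicator {y'<..real N} t \<partial>lborel)"
          by (intro Bochner_Integration.integral_cong refl)
             (auto simp: f1_def f2_def I_def y'_def indicator_def max_def)
        also have "\<dots> = 0" by (rule I0) (simp add: y'_def)
        finally show "emeasure M1 {x<..} = emeasure M2 {x<..}" using e1 e2 by simp
      qed
      then have "emeasure M1 A = emeasure M2 A" by simp
      moreover have "emeasure M1 A = ennreal (\<integral>t. f1 t * indicator A t \<partial>lborel)"
        unfolding M1_def by (rule emeasure_density_real[OF f1i f1p A])
      moreover have "emeasure M2 A = ennreal (\<integral>t. f2 t * indicator A t \<partial>lborel)"
        unfolding M2_def by (rule emeasure_density_real[OF f2i f2p A])
      moreover have "0 \<le> (\<integral>t. f1 t * indicator A t \<partial>lborel)" "0 \<le> (\<integral>t. f2 t * indicator A t \<partial>lborel)"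
        by (auto intro!: integral_nonneg_AE simp: f1p f2p)
      ultimately show ?thesis by simp
    qed
    have "AE t in lborel. f1 t = f2 t"
    proof (rule density_unique_real[OF f1i f2i])
      fix A :: "real set" assume "A \<in> sets lborel"
      then show "(\<integral>t\<in>A. f1 t \<partial>lborel) = (\<integral>t\<in>A. f2 t \<partial>lborel)"
        using eqA[of A] by (simp add: set_lebesgue_integral_def mult.commute)
    qed
    then show ?thesis
      by (rule AE_mp) (auto intro!: AE_I2 simp: f1_def f2_def I_def indicator_def max_def split: if_splits)
  qed
  have "AE t in lborel. \<forall>N::nat. t \<in> {- real N<..real N} \<longrightarrow> h t = 0"
    by (subst AE_all_countable) (use loc in blast)
  then show ?thesis
  proof (rule AE_mp[OF _ AE_I2], intro impI)
    fix t assume H: "\<forall>N::nat. t \<in> {- real N<..real N} \<longrightarrow> h t = 0"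
    obtain N :: nat where "\<bar>t\<bar> < real N" using reals_Archimedean2 by blast
    then have "t \<in> {- real N<..real N}" by auto
    then show "h t = 0" using H by blast
  qed
qed

theorem weak_deriv_unique:
  assumes "weak_deriv u g1" "weak_deriv u g2" "continuous_on UNIV u" "L2 g1" "L2 g2"
  shows "AE t in lborel. g1 t = g2 t"
proof -
  have "AE t in lborel. g1 t - g2 t = 0"
  proof (rule zero_on_intervals_AE)
    show "L2 (\<lambda>t. g1 t - g2 t)" using assms by (intro L2_diff)
    fix y x :: real assume "y \<le> x"
    have "(\<integral>t. (g1 t - g2 t) * indicator {y<..x} t \<partial>lborel)
        = (\<integral>t. g1 t * indicator {y<..x} t \<partial>lborel) - (\<integral>t. g2 t * indicator {y<..x} t \<partial>lborel)"
      using L2_interval_integrable[OF assms(4)] L2_interval_integrable[OF assms(5)]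
      by (simp add: left_diff_distrib)
    also have "\<dots> = 0"
      using weak_deriv_FTC[OF assms(1,3,4) \<open>y\<le>x\<close>] weak_deriv_FTC[OF assms(2,3,5) \<open>y\<le>x\<close>] by simp
    finally show "(\<integral>t. (g1 t - g2 t) * indicator {y<..x} t \<partial>lborel) = 0" .
  qed
  then show ?thesis by auto
qed

lemma abs_le_pow_bound:
  fixes a :: real
  shows "\<bar>a\<bar> \<le> 2 ^ k * a\<^sup>2 + (1/2) ^ k"
proof (cases "\<bar>a\<bar> \<le> (1/2) ^ k")
  case True then show ?thesis by (simp add: add_increasing)
next
  case False
  then have "(1/2) ^ k < \<bar>a\<bar>" by simp
  then have "1 < 2 ^ k * \<bar>a\<bar>" by (simp add: power_one_over field_simps)
  then have "\<bar>a\<bar> \<le> (2 ^ k * \<bar>a\<bar>) * \<bar>a\<bar>" by (simp add: mult_le_cancel_right1)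
  also have "\<dots> = 2 ^ k * a\<^sup>2" by (simp add: power2_eq_square)
  finally show ?thesis by (simp add: add_increasing2)
qed

lemma L2_complete:
  fixes f :: "nat \<Rightarrow> real \<Rightarrow> real"
  assumes L2f: "\<And>n. L2 (f n)"
    and cauchy: "\<And>e. e > 0 \<Longrightarrow> \<exists>N. \<forall>n\<ge>N. \<forall>m\<ge>N. (\<integral>x. (f n x - f m x)\<^sup>2 \<partial>lborel) < e"
  obtains g r where "L2 g" "strict_mono r" "AE x in lborel. (\<lambda>k. f (r k) x) \<longlonglongrightarrow> g x"
     "(\<lambda>n. \<integral>x. (f n x - g x)\<^sup>2 \<partial>lborel) \<longlonglongrightarrow> 0"
proof -
  have fm[measurable]: "f n \<in> borel_measurable lborel" for n using L2f by (simp add: L2_def)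
  have "\<forall>k. \<exists>N. \<forall>n\<ge>N. \<forall>m\<ge>N. (\<integral>x. (f n x - f m x)\<^sup>2 \<partial>lborel) < (1/8) ^ k"
    using cauchy by simp
  then obtain N where N: "\<And>k n m. N k \<le> n \<Longrightarrow> N k \<le> m \<Longrightarrow> (\<integral>x. (f n x - f m x)\<^sup>2 \<partial>lborel) < (1/8) ^ k"
    by metis
  define r where "r k = k + (\<Sum>j\<le>k. N j)" for k
  have r_mono: "strict_mono r"
    by (rule strict_mono_Suc_iff[THEN iffD2]) (simp add: r_def)
  have rN: "N k \<le> r k" for k
  proof -
    have "N k \<le> (\<Sum>j\<le>k. N j)" by (rule member_le_sum) auto
    then show ?thesis by (simp add: r_def)
  qed
  have rN2: "N j \<le> r k" if "j \<le> k" for j k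
    using rN[of j] strict_mono_leD[OF r_mono that] by simp
  define h where "h k x = f (r (Suc k)) x - f (r k) x" for k x
  have hm[measurable]: "h k \<in> borel_measurable lborel" for k unfolding h_def by measurable
  have hL2: "L2 (h k)" for k unfolding h_def by (intro L2_diff L2f)
  have hint: "(\<integral>x. (h k x)\<^sup>2 \<partial>lborel) < (1/8) ^ k" for k
    unfolding h_def by (intro N rN2) auto
  define S where "S x = (\<Sum>k. ennreal (2 ^ k * (h k x)\<^sup>2))" for x
  have "(\<integral>\<^sup>+x. S x \<partial>lborel) = (\<Sum>k. \<integral>\<^sup>+x. ennreal (2 ^ k * (h k x)\<^sup>2) \<partial>lborel)"
    unfolding S_def by (rule nn_integral_suminf) measurable
  also have "\<dots> \<le> (\<Sum>k. ennreal ((1/4) ^ k))"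
  proof (rule suminf_le)
    fix k
    have "(\<integral>\<^sup>+x. ennreal (2 ^ k * (h k x)\<^sup>2) \<partial>lborel) = ennreal (\<integral>x. 2 ^ k * (h k x)\<^sup>2 \<partial>lborel)"
      by (rule nn_integral_eq_integral) (use hL2[of k] in \<open>auto simp: L2_def\<close>)
    also have "(\<integral>x. 2 ^ k * (h k x)\<^sup>2 \<partial>lborel) \<le> (1/4) ^ k"
    proof -
      have "(\<integral>x. 2 ^ k * (h k x)\<^sup>2 \<partial>lborel) = 2 ^ k * (\<integral>x. (h k x)\<^sup>2 \<partial>lborel)" by simp
      also have "\<dots> \<le> 2 ^ k * (1/8) ^ k" using hint[of k] by (intro mult_left_mono) auto
      also have "(2::real) ^ k * (1/8) ^ k = (1/4) ^ k"
        by (simp add: power_mult_distrib[symmetric])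
      finally show ?thesis .
    qed
    then have "ennreal (\<integral>x. 2 ^ k * (h k x)\<^sup>2 \<partial>lborel) \<le> ennreal ((1/4) ^ k)" by (rule ennreal_leI)
    finally show "(\<integral>\<^sup>+x. ennreal (2 ^ k * (h k x)\<^sup>2) \<partial>lborel) \<le> ennreal ((1/4) ^ k)" .
  qed auto
  also have "\<dots> = ennreal (\<Sum>k. (1/4) ^ k)"
    by (rule suminf_ennreal2) (auto intro: summable_geometric)
  finally have "(\<integral>\<^sup>+x. S x \<partial>lborel) \<noteq> \<infinity>" by (auto simp: top_unique)
  then have AES: "AE x in lborel. S x \<noteq> \<infinity>"
    by (intro nn_integral_PInf_AE) (auto simp: S_def)
  define g where "g x = real_of_ereal (limsup (\<lambda>k. ereal (f (r k) x)))" for x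
  have gm[measurable]: "g \<in> borel_measurable lborel" unfolding g_def by measurable
  have conv: "(\<lambda>k. f (r k) x) \<longlonglongrightarrow> g x" if "S x \<noteq> \<infinity>" for x
  proof -
    have s1: "summable (\<lambda>k. 2 ^ k * (h k x)\<^sup>2)"
      using that unfolding S_def by (intro summable_suminf_not_top) auto
    have "summable (\<lambda>k. 2 ^ k * (h k x)\<^sup>2 + (1/2) ^ k)"
      by (intro summable_add s1 summable_geometric) simp
    then have "summable (\<lambda>k. \<bar>h k x\<bar>)"
      by (rule summable_comparison_test[rotated]) (auto intro: exI[of _ 0] abs_le_pow_bound)
    then have "summable (\<lambda>k. h k x)" by (rule summable_rabs_cancel)
    then have "(\<lambda>k. \<Sum>j<k. h j x) \<longlonglongrightarrow> (\<Sum>j. h j x)" by (rule summable_LIMSEQ)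
    then have "(\<lambda>k. f (r 0) x + (\<Sum>j<k. h j x)) \<longlonglongrightarrow> f (r 0) x + (\<Sum>j. h j x)"
      by (intro tendsto_add tendsto_const)
    moreover have "f (r 0) x + (\<Sum>j<k. h j x) = f (r k) x" for k
      unfolding h_def by (subst sum_lessThan_telescope[where f="\<lambda>j. f (r j) x"]) simp
    ultimately have L: "(\<lambda>k. f (r k) x) \<longlonglongrightarrow> f (r 0) x + (\<Sum>j. h j x)" by simp
    then have "limsup (\<lambda>k. ereal (f (r k) x)) = ereal (f (r 0) x + (\<Sum>j. h j x))"
      by (intro lim_imp_Limsup) auto
    then have "g x = f (r 0) x + (\<Sum>j. h j x)" by (simp add: g_def)
    then show ?thesis using L by simp
  qed
  have AEconv: "AE x in lborel. (\<lambda>k. f (r k) x) \<longlonglongrightarrow> g x"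
    using AES by eventually_elim (rule conv)
  have fat: "(\<integral>\<^sup>+x. ennreal ((f n x - g x)\<^sup>2) \<partial>lborel) \<le> ennreal ((1/8) ^ j)" if "N j \<le> n" for n j
  proof -
    have "(\<integral>\<^sup>+x. ennreal ((f n x - g x)\<^sup>2) \<partial>lborel)
        = (\<integral>\<^sup>+x. liminf (\<lambda>k. ennreal ((f n x - f (r k) x)\<^sup>2)) \<partial>lborel)"
    proof (rule nn_integral_cong_AE)
      show "AE x in lborel. ennreal ((f n x - g x)\<^sup>2) = liminf (\<lambda>k. ennreal ((f n x - f (r k) x)\<^sup>2))"
        using AEconv
      proof eventually_elim
        case (elim x)
        have "(\<lambda>k. ennreal ((f n x - f (r k) x)\<^sup>2)) \<longlonglongrightarrow> ennreal ((f n x - g x)\<^sup>2)"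
          by (intro tendsto_ennrealI tendsto_intros elim)
        then show ?case by (intro lim_imp_Liminf[symmetric]) auto
      qed
    qed
    also have "\<dots> \<le> liminf (\<lambda>k. \<integral>\<^sup>+x. ennreal ((f n x - f (r k) x)\<^sup>2) \<partial>lborel)"
      by (rule nn_integral_liminf) measurable
    also have "\<dots> \<le> ennreal ((1/8) ^ j)"
    proof (rule Liminf_le)
      show "\<forall>\<^sub>F k in sequentially. (\<integral>\<^sup>+x. ennreal ((f n x - f (r k) x)\<^sup>2) \<partial>lborel) \<le> ennreal ((1/8) ^ j)"
      proof (rule eventually_sequentiallyI[of j])
        fix k assume "j \<le> k"
        have "(\<integral>\<^sup>+x. ennreal ((f n x - f (r k) x)\<^sup>2) \<partial>lborel) = ennreal (\<integral>x. (f n x - f (r k) x)\<^sup>2 \<partial>lborel)"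
          by (rule nn_integral_eq_integral) (use L2_diff[OF L2f L2f, of n "r k"] in \<open>auto simp: L2_def\<close>)
        also have "\<dots> \<le> ennreal ((1/8) ^ j)"
          using N[of j n "r k"] that rN2[OF \<open>j\<le>k\<close>] by (intro ennreal_leI) auto
        finally show "(\<integral>\<^sup>+x. ennreal ((f n x - f (r k) x)\<^sup>2) \<partial>lborel) \<le> ennreal ((1/8) ^ j)" .
      qed
    qed simp
    finally show ?thesis .
  qed
  have intdiff: "integrable lborel (\<lambda>x. (f n x - g x)\<^sup>2)" if "N j \<le> n" for n j
  proof (rule integrableI_bounded)
    show "(\<lambda>x. (f n x - g x)\<^sup>2) \<in> borel_measurable lborel" by measurable
    have "(\<integral>\<^sup>+x. ennreal (norm ((f n x - g x)\<^sup>2)) \<partial>lborel) = (\<integral>\<^sup>+x. ennreal ((f n x - g x)\<^sup>2) \<partial>lborel)" by simp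
    also have "\<dots> < \<infinity>" using fat[OF that] by (simp add: le_less_trans)
    finally show "(\<integral>\<^sup>+x. ennreal (norm ((f n x - g x)\<^sup>2)) \<partial>lborel) < \<infinity>" .
  qed
  have intbound: "(\<integral>x. (f n x - g x)\<^sup>2 \<partial>lborel) \<le> (1/8) ^ j" if "N j \<le> n" for n j
  proof -
    have "ennreal (\<integral>x. (f n x - g x)\<^sup>2 \<partial>lborel) = (\<integral>\<^sup>+x. ennreal ((f n x - g x)\<^sup>2) \<partial>lborel)"
      by (rule nn_integral_eq_integral[symmetric]) (use intdiff[OF that] in auto)
    also have "\<dots> \<le> ennreal ((1/8) ^ j)" by (rule fat[OF that])
    finally show ?thesis by simp
  qed
  have "L2 (\<lambda>x. f (N 0) x - g x)" using intdiff[of 0 "N 0"] by (simp add: L2_def)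
  then have "L2 (\<lambda>x. f (N 0) x - (f (N 0) x - g x))" by (rule L2_diff[OF L2f])
  moreover have "(\<lambda>x. f (N 0) x - (f (N 0) x - g x)) = g" by auto
  ultimately have Lg: "L2 g" by simp
  have lim: "(\<lambda>n. \<integral>x. (f n x - g x)\<^sup>2 \<partial>lborel) \<longlonglongrightarrow> 0"
  proof (rule LIMSEQ_I)
    fix e :: real assume "0 < e"
    obtain j where j: "(1/8) ^ j < e" using real_arch_pow_inv[OF \<open>0<e\<close>, of "1/8"] by auto
    show "\<exists>no. \<forall>n\<ge>no. norm ((\<integral>x. (f n x - g x)\<^sup>2 \<partial>lborel) - 0) < e"
    proof (intro exI allI impI)
      fix n assume "N j \<le> n"
      then have "(\<integral>x. (f n x - g x)\<^sup>2 \<partial>lborel) \<le> (1/8) ^ j" by (rule intbound)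
      moreover have "0 \<le> (\<integral>x. (f n x - g x)\<^sup>2 \<partial>lborel)" by simp
      ultimately show "norm ((\<integral>x. (f n x - g x)\<^sup>2 \<partial>lborel) - 0) < e" using j by simp
    qed
  qed
  show ?thesis using that[OF Lg r_mono AEconv lim] .
qed

lemma bounded_seq_convergent_subseq:
  fixes X :: "nat \<Rightarrow> real"
  assumes "\<And>n. \<bar>X n\<bar> \<le> B"
  shows "\<exists>r. strict_mono r \<and> convergent (X \<circ> r)"
proof -
  have "\<forall>n. X n \<in> cball 0 B" using assms by (simp add: dist_real_def)
  then obtain l r where "strict_mono r" "(X \<circ> r) \<longlonglongrightarrow> l"
    using compact_cball[of "0::real" B] unfolding compact_def by blast
  then show ?thesis by (auto simp: convergent_def)
qed

lemma pointwise_subseq: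
  fixes w :: "nat \<Rightarrow> real \<Rightarrow> real"
  assumes bnd: "\<And>n x. \<bar>w n x\<bar> \<le> B"
    and eqc: "\<And>n x y. (w n x - w n y)\<^sup>2 \<le> M * \<bar>x - y\<bar>"
  obtains s u where "strict_mono s" "\<And>x. (\<lambda>n. w (s n) x) \<longlonglongrightarrow> u x"
proof -
  define q :: "nat \<Rightarrow> real" where "q k = real_of_rat (from_nat k)" for k
  define P where "P k s \<longleftrightarrow> convergent (\<lambda>n. w (s n) (q k))" for k and s :: "nat \<Rightarrow> nat"
  interpret subseqs P
  proof
    fix k and s :: "nat \<Rightarrow> nat" assume "strict_mono s"
    obtain r where "strict_mono r" "convergent ((\<lambda>n. w (s n) (q k)) \<circ> r)"
      using bounded_seq_convergent_subseq[of "\<lambda>n. w (s n) (q k)" B] bnd by blast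
    then show "\<exists>r'. strict_mono r' \<and> P k (s \<circ> r')" by (auto simp: P_def o_def)
  qed
  have stable: "P n (s \<circ> r)" if "strict_mono r" "P n s" for r s n
    using convergent_subseq_convergent[of "\<lambda>m. w (s m) (q n)" r] that by (simp add: P_def o_def)
  define s where "s = diagseq"
  have s_mono: "strict_mono s" unfolding s_def by (rule subseq_diagseq)
  have convq: "convergent (\<lambda>n. w (s n) (q k))" for k
  proof -
    have "P k (diagseq \<circ> ((+) (Suc k)))" by (rule diagseq_holds) (rule stable)
    then have "convergent (\<lambda>n. w (diagseq (n + Suc k)) (q k))" by (simp add: P_def o_def add.commute)
    then show ?thesis unfolding s_def by (rule convergent_ignore_initial_segment[THEN iffD1])
  qed
  define M' where "M' = \<bar>M\<bar> + 1"
  have M': "M' > 0" by (simp add: M'_def)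
  have eqc': "\<bar>w n x - w n y\<bar> \<le> sqrt (M' * \<bar>x - y\<bar>)" for n x y
  proof -
    have "(w n x - w n y)\<^sup>2 \<le> M' * \<bar>x - y\<bar>"
      using eqc[of n x y] by (smt (verit) M'_def abs_ge_zero abs_ge_self mult_right_mono)
    then have "sqrt ((w n x - w n y)\<^sup>2) \<le> sqrt (M' * \<bar>x - y\<bar>)" by (rule real_sqrt_le_mono)
    then show ?thesis by simp
  qed
  have conv: "convergent (\<lambda>n. w (s n) x)" for x
  proof -
    have "Cauchy (\<lambda>n. w (s n) x)"
    proof (rule Cauchy_iff[THEN iffD2], intro allI impI)
      fix e :: real assume "0 < e"
      define d where "d = (e / 3)\<^sup>2 / M'"
      have "d > 0" using \<open>0<e\<close> M' by (simp add: d_def)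
      obtain t where "t \<in> \<rat>" "x < t" "t < x + d" using Rats_dense_in_real[of x "x + d"] \<open>d>0\<close> by auto
      then obtain k where tk: "t = q k"
        unfolding q_def by (metis Rats_cases from_nat_to_nat)
      have close: "\<bar>w n x - w n t\<bar> < e / 3" for n
      proof -
        have "M' * \<bar>x - t\<bar> < M' * d" using \<open>x<t\<close> \<open>t < x+d\<close> M' by (intro mult_strict_left_mono) auto
        also have "\<dots> = (e/3)\<^sup>2" using M' by (simp add: d_def)
        finally have "sqrt (M' * \<bar>x - t\<bar>) < e / 3"
          using \<open>0<e\<close> by (metis abs_of_pos real_sqrt_abs real_sqrt_less_mono zero_less_divide_iff zero_less_numeral)
        then show ?thesis using eqc'[of n x t] by linarith
      qed
      have "Cauchy (\<lambda>n. w (s n) t)" using convq[of k] tk by (simp add: Cauchy_convergent_iff)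
      then obtain N where N: "\<And>m n. m \<ge> N \<Longrightarrow> n \<ge> N \<Longrightarrow> \<bar>w (s m) t - w (s n) t\<bar> < e / 3"
        unfolding Cauchy_iff using \<open>0<e\<close> by (metis real_norm_def zero_less_divide_iff zero_less_numeral)
      show "\<exists>N. \<forall>m\<ge>N. \<forall>n\<ge>N. norm (w (s m) x - w (s n) x) < e"
      proof (intro exI allI impI)
        fix m n assume "N \<le> m" "N \<le> n"
        have "\<bar>w (s m) x - w (s n) x\<bar> \<le> \<bar>w (s m) x - w (s m) t\<bar> + \<bar>w (s m) t - w (s n) t\<bar> + \<bar>w (s n) t - w (s n) x\<bar>"
          by linarith
        also have "\<dots> < e / 3 + e / 3 + e / 3"
          using close[of "s m"] close[of "s n"] N[OF \<open>N\<le>m\<close> \<open>N\<le>n\<close>] by (simp add: abs_minus_commute)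
        finally show "norm (w (s m) x - w (s n) x) < e" by simp
      qed
    qed
    then show ?thesis by (simp add: Cauchy_convergent_iff)
  qed
  show ?thesis
    using that[OF s_mono, of "\<lambda>x. lim (\<lambda>n. w (s n) x)"] conv by (simp add: convergent_LIMSEQ_iff)
qed

lemma H1_props:
  assumes "u \<in> H1"
  shows "continuous_on UNIV u" "L2 u" "weak_deriv u (H1_deriv u)" "L2 (H1_deriv u)"
proof -
  have ex: "\<exists>g. weak_deriv u g \<and> integrable lborel (\<lambda>x. (g x)\<^sup>2)" using assms by (simp add: H1_def)
  have "weak_deriv u (H1_deriv u) \<and> integrable lborel (\<lambda>x. (H1_deriv u x)\<^sup>2)"
    unfolding H1_deriv_def by (rule someI_ex[OF ex])
  then show "weak_deriv u (H1_deriv u)" "L2 (H1_deriv u)" by (auto simp: L2_def weak_deriv_def)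
  show "continuous_on UNIV u" "L2 u" using assms by (auto simp: H1_def L2_def)
qed

lemma H1_equicont:
  assumes "u \<in> H1"
  shows "(u x - u y)\<^sup>2 \<le> \<bar>x - y\<bar> * (\<integral>t. (H1_deriv u t)\<^sup>2 \<partial>lborel)"
proof -
  note P = H1_props[OF assms]
  have *: "(u x - u y)\<^sup>2 \<le> (x - y) * (\<integral>t. (H1_deriv u t)\<^sup>2 \<partial>lborel)" if "y \<le> x" for x y
    using weak_deriv_FTC[OF P(3) P(1) P(4) that] L2_interval_bound[OF P(4) that] by simp
  show ?thesis
  proof (cases "y \<le> x")
    case True then show ?thesis using *[OF True] by simp
  next
    case False
    then have "(u y - u x)\<^sup>2 \<le> (y - x) * (\<integral>t. (H1_deriv u t)\<^sup>2 \<partial>lborel)" by (intro *) simp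
    then show ?thesis using False by (simp add: power2_commute)
  qed
qed

lemma H1_bounded:
  assumes "u \<in> H1"
  obtains B where "\<And>x. \<bar>u x\<bar> \<le> B"
proof -
  note P = H1_props[OF assms]
  define G where "G = (\<integral>t. (H1_deriv u t)\<^sup>2 \<partial>lborel)"
  define U where "U = (\<integral>t. (u t)\<^sup>2 \<partial>lborel)"
  have G0: "0 \<le> G" by (simp add: G_def)
  have "\<bar>u x\<bar> \<le> sqrt (2 * U + 2 * G)" for x
  proof -
    have pt: "(u x)\<^sup>2 \<le> 2 * (u t)\<^sup>2 + 2 * G" if "t \<in> {x<..x+1}" for t
    proof -
      have "(u t - u x)\<^sup>2 \<le> \<bar>t - x\<bar> * G" using H1_equicont[OF assms, of t x] by (simp add: G_def)
      also have "\<dots> \<le> 1 * G" using that G0 by (intro mult_right_mono) auto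
      finally have "(u t - u x)\<^sup>2 \<le> G" by simp
      moreover have "(u x)\<^sup>2 \<le> 2 * (u t)\<^sup>2 + 2 * (u t - u x)\<^sup>2"
      proof -
        have "2 * (u t)\<^sup>2 + 2 * (u t - u x)\<^sup>2 - (u x)\<^sup>2 = (2 * u t - u x)\<^sup>2"
          by (simp add: power2_eq_square algebra_simps)
        moreover have "0 \<le> (2 * u t - u x)\<^sup>2" by simp
        ultimately show ?thesis by linarith
      qed
      ultimately show ?thesis by linarith
    qed
    have iu: "integrable lborel (\<lambda>t. (u t)\<^sup>2)" using P(2) by (simp add: L2_def)
    have ii: "integrable lborel (\<lambda>t. indicator {x<..x+1} t :: real)"
      by (simp add: integrable_indicator_iff)
    have "(u x)\<^sup>2 = (\<integral>t. (u x)\<^sup>2 * indicator {x<..x+1} t \<partial>lborel)" by simp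
    also have "\<dots> \<le> (\<integral>t. 2 * ((u t)\<^sup>2 * indicator {x<..x+1} t) + 2 * G * indicator {x<..x+1} t \<partial>lborel)"
    proof (rule integral_mono)
      show "integrable lborel (\<lambda>t. (u x)\<^sup>2 * indicator {x<..x+1} t)" using ii by simp
      show "integrable lborel (\<lambda>t. 2 * ((u t)\<^sup>2 * indicator {x<..x+1} t) + 2 * G * indicator {x<..x+1} t)"
        using ii iu by (intro Bochner_Integration.integrable_add integrable_mult_right integrable_real_mult_indicator) auto
      fix t show "(u x)\<^sup>2 * indicator {x<..x+1} t \<le> 2 * ((u t)\<^sup>2 * indicator {x<..x+1} t) + 2 * G * indicator {x<..x+1} t"
        using pt[of t] by (auto simp: indicator_def)
    qed
    also have "\<dots> = 2 * (\<integral>t. (u t)\<^sup>2 * indicator {x<..x+1} t \<partial>lborel) + 2 * G"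
      using ii iu by (subst Bochner_Integration.integral_add) (auto intro: integrable_real_mult_indicator)
    also have "(\<integral>t. (u t)\<^sup>2 * indicator {x<..x+1} t \<partial>lborel) \<le> U"
      unfolding U_def using iu
      by (intro integral_mono integrable_real_mult_indicator) (auto simp: indicator_def)
    finally have "(u x)\<^sup>2 \<le> 2 * U + 2 * G" by linarith
    then have "sqrt ((u x)\<^sup>2) \<le> sqrt (2 * U + 2 * G)" by (rule real_sqrt_le_mono)
    then show ?thesis by simp
  qed
  then show ?thesis using that by blast
qed

lemma H1_le_sup_norm:
  assumes "u \<in> H1" shows "\<bar>u x\<bar> \<le> sup_norm u"
proof -
  obtain B where B: "\<And>x. \<bar>u x\<bar> \<le> B" using H1_bounded[OF assms] by blast
  have "bdd_above (range (\<lambda>x. \<bar>u x\<bar>))" by (intro bdd_aboveI2[where M=B]) (rule B)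
  then show ?thesis unfolding sup_norm_def by (rule cSUP_upper[OF UNIV_I])
qed

lemma sup_norm_eq1:
  assumes "\<And>x. \<bar>v x\<bar> \<le> 1" "v a = 1" shows "sup_norm v = 1"
  unfolding sup_norm_def
  by (rule cSup_eq_maximum) (use assms in \<open>auto intro!: image_eqI[of _ _ a]\<close>)

lemma Kset_bound: "u \<in> Kset a \<Longrightarrow> \<bar>u x\<bar> \<le> 1"
  using H1_le_sup_norm[of u x] by (auto simp: Kset_def)

lemma Kset_intro:
  assumes "v \<in> H1" "\<And>x. \<bar>v x\<bar> \<le> 1" "v a = 1" shows "v \<in> Kset a"
  using assms(1,3) sup_norm_eq1[of v a, OF assms(2) assms(3)] by (simp add: Kset_def)

lemma H1_lin:
  assumes "u \<in> H1" "v \<in> H1"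
  shows "(\<lambda>x. c * u x + d * v x) \<in> H1"
    and "AE x in lborel. H1_deriv (\<lambda>x. c * u x + d * v x) x = c * H1_deriv u x + d * H1_deriv v x"
proof -
  note P = H1_props[OF assms(1)] and Q = H1_props[OF assms(2)]
  have wd: "weak_deriv (\<lambda>x. c * u x + d * v x) (\<lambda>x. c * H1_deriv u x + d * H1_deriv v x)"
    by (rule weak_deriv_lin) (use P Q in auto)
  have L: "L2 (\<lambda>x. c * H1_deriv u x + d * H1_deriv v x)" using P Q by (intro L2_add L2_cmult)
  have Lw: "L2 (\<lambda>x. c * u x + d * v x)" using P Q by (intro L2_add L2_cmult)
  have cw: "continuous_on UNIV (\<lambda>x. c * u x + d * v x)" using P Q by (intro continuous_intros)
  show H: "(\<lambda>x. c * u x + d * v x) \<in> H1"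
    unfolding H1_def using wd L Lw cw by (auto simp: L2_def)
  note R = H1_props[OF H]
  show "AE x in lborel. H1_deriv (\<lambda>x. c * u x + d * v x) x = c * H1_deriv u x + d * H1_deriv v x"
    by (rule weak_deriv_unique[OF R(3) wd cw R(4) L])
qed

lemma ibp_test:
  fixes f f' :: "real \<Rightarrow> real"
  assumes fd: "\<And>x. (f has_real_derivative f' x) (at x)" and fc: "continuous_on UNIV f'"
    and \<phi>: "test_fun \<phi>"
  shows "(\<integral>x. f x * deriv \<phi> x \<partial>lborel) = - (\<integral>x. f' x * \<phi> x \<partial>lborel)"
proof -
  obtain R where "R > 0" and z: "\<And>x. R < \<bar>x\<bar> \<Longrightarrow> \<phi> x = 0" and zd: "\<And>x. R < \<bar>x\<bar> \<Longrightarrow> deriv \<phi> x = 0"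
    using test_fun_supp[OF \<phi>] by blast
  have fcont: "continuous_on UNIV f" using fd by (intro continuous_at_imp_continuous_on ballI DERIV_isCont) auto
  have pc: "continuous_on UNIV \<phi>" "continuous_on UNIV (deriv \<phi>)" using \<phi> test_fun_cont test_fun_cont_deriv by auto
  have i1: "integrable lborel (\<lambda>x. f x * deriv \<phi> x)"
    by (rule cont_supp_integrable[where R=R]) (auto intro!: continuous_intros fcont pc simp: zd)
  have i2: "integrable lborel (\<lambda>x. f' x * \<phi> x)"
    by (rule cont_supp_integrable[where R=R]) (auto intro!: continuous_intros fc pc simp: z)
  define a where "a = - (R + 1)"
  define b where "b = R + 1"
  have ftc: "(\<integral>x. indicator {a..b} x *\<^sub>R (f' x * \<phi> x + f x * deriv \<phi> x) \<partial>lborel) = f b * \<phi> b - f a * \<phi> a"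
  proof (rule integral_FTC_atLeastAtMost)
    show "a \<le> b" using \<open>R>0\<close> by (simp add: a_def b_def)
    show "continuous_on {a..b} (\<lambda>x. f' x * \<phi> x + f x * deriv \<phi> x)"
      by (intro continuous_intros continuous_on_subset[OF fc] continuous_on_subset[OF fcont]
          continuous_on_subset[OF pc(1)] continuous_on_subset[OF pc(2)]) auto
    fix x
    have "((\<lambda>x. f x * \<phi> x) has_real_derivative f' x * \<phi> x + deriv \<phi> x * f x) (at x)"
      by (rule DERIV_mult[OF fd test_fun_DERIV[OF \<phi>]])
    then show "((\<lambda>x. f x * \<phi> x) has_vector_derivative f' x * \<phi> x + f x * deriv \<phi> x) (at x within {a..b})"
      by (simp add: has_real_derivative_iff_has_vector_derivative[symmetric] has_field_derivative_at_within mult.commute)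
  qed
  have ab: "\<phi> b = 0" "\<phi> a = 0" using z \<open>R>0\<close> by (auto simp: a_def b_def)
  have ind: "(\<lambda>x. indicator {a..b} x *\<^sub>R (f' x * \<phi> x + f x * deriv \<phi> x)) = (\<lambda>x. f' x * \<phi> x + f x * deriv \<phi> x)"
  proof
    fix x show "indicator {a..b} x *\<^sub>R (f' x * \<phi> x + f x * deriv \<phi> x) = f' x * \<phi> x + f x * deriv \<phi> x"
      using z[of x] zd[of x] by (cases "x \<in> {a..b}") (auto simp: a_def b_def indicator_def abs_if)
  qed
  have "(\<integral>x. f' x * \<phi> x + f x * deriv \<phi> x \<partial>lborel) = 0" using ftc ab ind by simp
  then show ?thesis using i1 i2 by simp
qed

lemma bmp_H1: assumes "0 < e" shows "bmp y x e \<in> H1"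
proof -
  have "\<exists>R. \<forall>t. R < \<bar>t\<bar> \<longrightarrow> bmp y x e t = 0" using bmp_test[OF assms] by (simp add: test_fun_def)
  then obtain R where "\<And>t. R < \<bar>t\<bar> \<Longrightarrow> bmp y x e t = 0" by blast
  then have L: "L2 (bmp y x e)" by (intro cont_supp_L2[OF bmp_cont])
  obtain R' where "\<And>t. R' < \<bar>t\<bar> \<Longrightarrow> deriv (bmp y x e) t = 0" using test_fun_supp[OF bmp_test[OF assms]] by blast
  then have "\<And>t. R' < \<bar>t\<bar> \<Longrightarrow> dbmp y x e t = 0" by (simp add: deriv_bmp)
  then have L': "L2 (dbmp y x e)" by (rule cont_supp_L2[OF dbmp_cont])
  have "weak_deriv (bmp y x e) (dbmp y x e)"
    unfolding weak_deriv_def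
    using L' ibp_test[OF bmp_deriv dbmp_cont] by (auto simp: L2_def)
  then show ?thesis unfolding H1_def using L L' bmp_cont by (auto simp: L2_def)
qed

lemma Kset_nonempty: "Kset a \<noteq> {}"
proof -
  have "bmp (a - 1) a (1/2) \<in> Kset a"
  proof (rule Kset_intro)
    show "bmp (a - 1) a (1/2) \<in> H1" by (rule bmp_H1) simp
    show "\<bar>bmp (a - 1) a (1/2) t\<bar> \<le> 1" for t by (rule bmp_abs)
    show "bmp (a - 1) a (1/2) a = 1" by (simp add: bmp_def sst_ge1 sst_le0)
  qed
  then show ?thesis by blast
qed

lemma L2_conv_inner:
  assumes "\<And>n. L2 (f n)" "L2 h" "L2 \<psi>" "(\<lambda>n. \<integral>x. (f n x - h x)\<^sup>2 \<partial>lborel) \<longlonglongrightarrow> 0"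
  shows "(\<lambda>n. \<integral>x. f n x * \<psi> x \<partial>lborel) \<longlonglongrightarrow> (\<integral>x. h x * \<psi> x \<partial>lborel)"
proof -
  have b: "\<bar>(\<integral>x. f n x * \<psi> x \<partial>lborel) - (\<integral>x. h x * \<psi> x \<partial>lborel)\<bar>
      \<le> sqrt (\<integral>x. (f n x - h x)\<^sup>2 \<partial>lborel) * sqrt (\<integral>x. (\<psi> x)\<^sup>2 \<partial>lborel)" for n
  proof -
    have "(\<integral>x. f n x * \<psi> x \<partial>lborel) - (\<integral>x. h x * \<psi> x \<partial>lborel) = (\<integral>x. (f n x - h x) * \<psi> x \<partial>lborel)"
      using L2_prod_integrable[OF assms(1) assms(3)] L2_prod_integrable[OF assms(2,3)]
      by (simp add: left_diff_distrib)
    also have "\<bar>\<dots>\<bar> \<le> sqrt (\<integral>x. (f n x - h x)\<^sup>2 \<partial>lborel) * sqrt (\<integral>x. (\<psi> x)\<^sup>2 \<partial>lborel)"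
      by (rule L2_CS_abs) (use assms in \<open>auto intro: L2_diff\<close>)
    finally show ?thesis .
  qed
  have "(\<lambda>n. sqrt (\<integral>x. (f n x - h x)\<^sup>2 \<partial>lborel) * sqrt (\<integral>x. (\<psi> x)\<^sup>2 \<partial>lborel)) \<longlonglongrightarrow> sqrt 0 * sqrt (\<integral>x. (\<psi> x)\<^sup>2 \<partial>lborel)"
    by (rule tendsto_mult_right[OF tendsto_real_sqrt[OF assms(4)]])
  then have Y: "(\<lambda>n. sqrt (\<integral>x. (f n x - h x)\<^sup>2 \<partial>lborel) * sqrt (\<integral>x. (\<psi> x)\<^sup>2 \<partial>lborel)) \<longlonglongrightarrow> 0" by simp
  have ev: "\<forall>\<^sub>F n in sequentially. norm ((\<integral>x. f n x * \<psi> x \<partial>lborel) - (\<integral>x. h x * \<psi> x \<partial>lborel))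
      \<le> sqrt (\<integral>x. (f n x - h x)\<^sup>2 \<partial>lborel) * sqrt (\<integral>x. (\<psi> x)\<^sup>2 \<partial>lborel)"
    by (rule always_eventually) (use b in simp)
  have "(\<lambda>n. (\<integral>x. f n x * \<psi> x \<partial>lborel) - (\<integral>x. h x * \<psi> x \<partial>lborel)) \<longlonglongrightarrow> 0"
    by (rule Lim_null_comparison[OF ev Y])
  then show ?thesis by (simp add: LIM_zero_iff)
qed

lemma L2_conv_sq:
  assumes "\<And>n. L2 (f n)" "L2 h" "(\<lambda>n. \<integral>x. (f n x - h x)\<^sup>2 \<partial>lborel) \<longlonglongrightarrow> 0"
  shows "(\<lambda>n. \<integral>x. (f n x)\<^sup>2 \<partial>lborel) \<longlonglongrightarrow> (\<integral>x. (h x)\<^sup>2 \<partial>lborel)"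
proof -
  have eq: "(\<integral>x. (f n x)\<^sup>2 \<partial>lborel) = (\<integral>x. (f n x - h x)\<^sup>2 \<partial>lborel) + 2 * (\<integral>x. f n x * h x \<partial>lborel) - (\<integral>x. (h x)\<^sup>2 \<partial>lborel)" for n
  proof -
    have "(\<lambda>x. (f n x)\<^sup>2) = (\<lambda>x. (f n x - h x)\<^sup>2 + 2 * (f n x * h x) - (h x)\<^sup>2)"
      by (auto simp: power2_eq_square algebra_simps)
    moreover have "integrable lborel (\<lambda>x. (f n x - h x)\<^sup>2)" using L2_diff[OF assms(1,2)] by (simp add: L2_def)
    moreover have "integrable lborel (\<lambda>x. f n x * h x)" by (rule L2_prod_integrable[OF assms(1,2)])
    moreover have "integrable lborel (\<lambda>x. (h x)\<^sup>2)" using assms(2) by (simp add: L2_def)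
    ultimately show ?thesis by simp
  qed
  have "(\<lambda>n. (\<integral>x. (f n x - h x)\<^sup>2 \<partial>lborel) + 2 * (\<integral>x. f n x * h x \<partial>lborel) - (\<integral>x. (h x)\<^sup>2 \<partial>lborel))
     \<longlonglongrightarrow> 0 + 2 * (\<integral>x. h x * h x \<partial>lborel) - (\<integral>x. (h x)\<^sup>2 \<partial>lborel)"
    by (rule tendsto_diff[OF tendsto_add[OF assms(3) tendsto_mult[OF tendsto_const L2_conv_inner[OF assms(1,2,2) assms(3)]]] tendsto_const])
  then show ?thesis unfolding eq by (simp add: power2_eq_square)
qed

lemma holder_cont:
  fixes f :: "real \<Rightarrow> real"
  assumes "\<And>x y. (f x - f y)\<^sup>2 \<le> M * \<bar>x - y\<bar>"
  shows "continuous_on UNIV f"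
  unfolding continuous_on_iff
proof (intro ballI allI impI)
  fix x e :: real assume "0 < e"
  define M' where "M' = \<bar>M\<bar> + 1"
  have M': "0 < M'" by (simp add: M'_def)
  show "\<exists>d>0. \<forall>x'\<in>UNIV. dist x' x < d \<longrightarrow> dist (f x') (f x) < e"
  proof (intro exI conjI ballI impI)
    show "0 < e\<^sup>2 / M'" using \<open>0<e\<close> M' by simp
    fix x' assume "dist x' x < e\<^sup>2 / M'"
    then have "M' * \<bar>x' - x\<bar> < e\<^sup>2" using M' by (simp add: dist_real_def field_simps)
    moreover have "(f x' - f x)\<^sup>2 \<le> M' * \<bar>x' - x\<bar>"
    proof -
      have "M * \<bar>x' - x\<bar> \<le> M' * \<bar>x' - x\<bar>" by (intro mult_right_mono) (auto simp: M'_def)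
      then show ?thesis using assms[of x' x] by linarith
    qed
    ultimately have "\<bar>f x' - f x\<bar>\<^sup>2 < e\<^sup>2" by simp
    then have "\<bar>f x' - f x\<bar> < e" by (rule power_less_imp_less_base) (use \<open>0<e\<close> in simp)
    then show "dist (f x') (f x) < e" by (simp add: dist_real_def)
  qed
qed

lemma fbm_measurable:
  fixes f :: "real \<Rightarrow> real"
  assumes "finite_borel_measure \<mu>" "continuous_on UNIV f"
  shows "f \<in> borel_measurable \<mu>"
proof -
  have "sets \<mu> = sets borel" using assms(1) by (simp add: finite_borel_measure_def)
  then have eq: "borel_measurable \<mu> = borel_measurable borel" by (rule measurable_cong_sets) simp
  show ?thesis unfolding eq by (rule borel_measurable_continuous_onI[OF assms(2)])
qed

lemma W_props:
  fixes u :: "real \<Rightarrow> real"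
  assumes "finite_borel_measure \<mu>" "continuous_on UNIV u" "\<And>x. \<bar>u x\<bar> \<le> 1"
  shows "integrable \<mu> (\<lambda>x. u x * u x)" "0 \<le> (\<integral>x. u x * u x \<partial>\<mu>)"
    "(\<integral>x. u x * u x \<partial>\<mu>) \<le> measure \<mu> (space \<mu>)"
proof -
  interpret finite_measure \<mu> using assms(1) by (simp add: finite_borel_measure_def)
  have m: "(\<lambda>x. u x * u x) \<in> borel_measurable \<mu>"
    using fbm_measurable[OF assms(1) assms(2)] by measurable
  have b: "\<bar>u x * u x\<bar> \<le> 1" for x
  proof -
    have "\<bar>u x\<bar> * \<bar>u x\<bar> \<le> 1" using assms(3)[of x] by (intro mult_le_one) auto
    then show ?thesis by (simp only: abs_mult)
  qed
  show i: "integrable \<mu> (\<lambda>x. u x * u x)"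
    by (rule integrable_const_bound[where B=1]) (use b m in auto)
  show "0 \<le> (\<integral>x. u x * u x \<partial>\<mu>)" by simp
  have "(\<integral>x. u x * u x \<partial>\<mu>) \<le> (\<integral>x. 1 \<partial>\<mu>)"
    by (rule integral_mono[OF i]) (use b in \<open>auto simp: abs_le_iff\<close>)
  then show "(\<integral>x. u x * u x \<partial>\<mu>) \<le> measure \<mu> (space \<mu>)" by simp
qed

lemma W_conv:
  fixes f :: "nat \<Rightarrow> real \<Rightarrow> real" and u :: "real \<Rightarrow> real"
  assumes "finite_borel_measure \<mu>" "\<And>n. continuous_on UNIV (f n)" "continuous_on UNIV u"
    "\<And>n x. \<bar>f n x\<bar> \<le> 1" "\<And>x. (\<lambda>n. f n x) \<longlonglongrightarrow> u x"
  shows "(\<lambda>n. \<integral>x. f n x * f n x \<partial>\<mu>) \<longlonglongrightarrow> (\<integral>x. u x * u x \<partial>\<mu>)"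
proof -
  interpret finite_measure \<mu> using assms(1) by (simp add: finite_borel_measure_def)
  show ?thesis
  proof (rule integral_dominated_convergence[where w="\<lambda>_. 1" and M=\<mu> and s="\<lambda>n x. f n x * f n x" and f="\<lambda>x. u x * u x"])
    show "(\<lambda>x. u x * u x) \<in> borel_measurable \<mu>" using fbm_measurable[OF assms(1) assms(3)] by measurable
    show "(\<lambda>x. f n x * f n x) \<in> borel_measurable \<mu>" for n using fbm_measurable[OF assms(1) assms(2)] by measurable
    show "integrable \<mu> (\<lambda>_. 1::real)" by simp
    show "AE x in \<mu>. (\<lambda>n. f n x * f n x) \<longlonglongrightarrow> u x * u x"
      by (intro AE_I2 tendsto_mult assms(5))
    show "AE x in \<mu>. norm (f n x * f n x) \<le> 1" for n
    proof (intro AE_I2)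
      fix x
      have "\<bar>f n x\<bar> * \<bar>f n x\<bar> \<le> 1" using assms(4)[of n x] by (intro mult_le_one) auto
      then show "norm (f n x * f n x) \<le> 1" by (simp only: real_norm_def abs_mult)
    qed
  qed
qed

lemma V0_props:
  fixes V0 :: "real \<Rightarrow> real"
  assumes "esssup lborel (\<lambda>x. ereal \<bar>V0 x\<bar>) < \<infinity>"
    and "esssup lborel (\<lambda>x. ereal (- V0 x)) < 0"
  obtains c K where "0 < c" "AE x in lborel. c \<le> V0 x" "AE x in lborel. \<bar>V0 x\<bar> \<le> K"
proof -
  define s1 where "s1 = esssup lborel (\<lambda>x. ereal \<bar>V0 x\<bar>)"
  define s2 where "s2 = esssup lborel (\<lambda>x. ereal (- V0 x))"
  have A1: "AE x in lborel. ereal \<bar>V0 x\<bar> \<le> s1" unfolding s1_def by (rule esssup_AE)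
  have A2: "AE x in lborel. ereal (- V0 x) \<le> s2" unfolding s2_def by (rule esssup_AE)
  obtain K where K: "s1 \<le> ereal K"
    using assms(1) unfolding s1_def by (cases "esssup lborel (\<lambda>x. ereal \<bar>V0 x\<bar>)") auto
  obtain c where c: "0 < c" "s2 \<le> ereal (- c)"
  proof (cases s2)
    case (real r) then show ?thesis using assms(2) that[of "- r"] by (simp add: s2_def)
  next
    case PInf then show ?thesis using assms(2) by (simp add: s2_def)
  next
    case MInf then show ?thesis using that[of 1] by simp
  qed
  have "AE x in lborel. c \<le> V0 x" using A2
  proof eventually_elim
    case (elim x)
    then have "ereal (- V0 x) \<le> ereal (- c)" using c(2) by (rule order_trans)
    then show ?case by simp
  qed
  moreover have "AE x in lborel. \<bar>V0 x\<bar> \<le> K" using A1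
  proof eventually_elim
    case (elim x)
    then have "ereal \<bar>V0 x\<bar> \<le> ereal K" using K by (rule order_trans)
    then show ?case by simp
  qed
  ultimately show ?thesis using that c(1) by blast
qed

lemma V0_integrable:
  fixes V0 :: "real \<Rightarrow> real"
  assumes "V0 \<in> borel_measurable lborel" "AE x in lborel. \<bar>V0 x\<bar> \<le> K" "L2 f" "L2 g"
  shows "integrable lborel (\<lambda>x. V0 x * f x * g x)"
proof (rule Bochner_Integration.integrable_bound)
  show "integrable lborel (\<lambda>x. K * (f x * g x))"
    using L2_prod_integrable[OF assms(3,4)] by simp
  show "(\<lambda>x. V0 x * f x * g x) \<in> borel_measurable lborel"
    using assms(1) assms(3,4) by (auto simp: L2_def)
  show "AE x in lborel. norm (V0 x * f x * g x) \<le> norm (K * (f x * g x))"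
    using assms(2)
  proof eventually_elim
    case (elim x)
    have "\<bar>V0 x * f x * g x\<bar> = \<bar>V0 x\<bar> * \<bar>f x * g x\<bar>" by (simp add: abs_mult)
    also have "\<dots> \<le> K * \<bar>f x * g x\<bar>" using elim by (intro mult_right_mono) auto
    also have "\<dots> \<le> \<bar>K\<bar> * \<bar>f x * g x\<bar>" by (intro mult_right_mono) auto
    also have "\<dots> = \<bar>K * (f x * g x)\<bar>" by (simp add: abs_mult)
    finally show ?case by simp
  qed
qed

lemma V0u_L2:
  fixes V0 :: "real \<Rightarrow> real"
  assumes "V0 \<in> borel_measurable lborel" "AE x in lborel. \<bar>V0 x\<bar> \<le> K" "L2 u"
  shows "L2 (\<lambda>x. V0 x * u x)"
proof -
  have "integrable lborel (\<lambda>x. V0 x * (V0 x * u x) * u x)"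
  proof (rule Bochner_Integration.integrable_bound)
    show "integrable lborel (\<lambda>x. K\<^sup>2 * (u x)\<^sup>2)" using assms(3) by (simp add: L2_def)
    show "(\<lambda>x. V0 x * (V0 x * u x) * u x) \<in> borel_measurable lborel"
      using assms(1) assms(3) by (auto simp: L2_def)
    show "AE x in lborel. norm (V0 x * (V0 x * u x) * u x) \<le> norm (K\<^sup>2 * (u x)\<^sup>2)"
      using assms(2)
    proof eventually_elim
      case (elim x)
      have "\<bar>V0 x\<bar>\<^sup>2 \<le> K\<^sup>2" using elim by (intro power_mono) auto
      then have "(V0 x)\<^sup>2 \<le> K\<^sup>2" by simp
      then have "(V0 x)\<^sup>2 * (u x)\<^sup>2 \<le> K\<^sup>2 * (u x)\<^sup>2" by (intro mult_right_mono) auto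
      then show ?case by (simp add: power2_eq_square abs_mult algebra_simps)
    qed
  qed
  moreover have "(\<lambda>x. (V0 x * u x)\<^sup>2) = (\<lambda>x. V0 x * (V0 x * u x) * u x)"
    by (auto simp: power2_eq_square algebra_simps)
  ultimately show ?thesis using assms by (auto simp: L2_def)
qed

lemma V0_lower:
  fixes V0 :: "real \<Rightarrow> real"
  assumes V0m: "V0 \<in> borel_measurable lborel" and KV: "AE x in lborel. \<bar>V0 x\<bar> \<le> K"
    and cV: "AE x in lborel. c \<le> V0 x" and f: "L2 f"
  shows "c * (\<integral>x. (f x)\<^sup>2 \<partial>lborel) \<le> (\<integral>x. V0 x * f x * f x \<partial>lborel)"
proof -
  have "c * (\<integral>x. (f x)\<^sup>2 \<partial>lborel) = (\<integral>x. c * (f x)\<^sup>2 \<partial>lborel)" by simp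
  also have "\<dots> \<le> (\<integral>x. V0 x * f x * f x \<partial>lborel)"
  proof (rule integral_mono_AE)
    show "integrable lborel (\<lambda>x. c * (f x)\<^sup>2)" using f by (simp add: L2_def)
    show "integrable lborel (\<lambda>x. V0 x * f x * f x)" by (rule V0_integrable[OF V0m KV f f])
    show "AE x in lborel. c * (f x)\<^sup>2 \<le> V0 x * f x * f x" using cV
    proof eventually_elim
      case (elim x)
      have "c * (f x * f x) \<le> V0 x * (f x * f x)" using elim by (intro mult_right_mono) auto
      then show ?case by (simp add: power2_eq_square mult.assoc)
    qed
  qed
  finally show ?thesis .
qed

lemma para:
  fixes V0 :: "real \<Rightarrow> real"
  assumes V0m: "V0 \<in> borel_measurable lborel" and KV: "AE x in lborel. \<bar>V0 x\<bar> \<le> K"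
    and v: "v \<in> H1" and w: "w \<in> H1"
  shows "(\<integral>x. (H1_deriv v x)\<^sup>2 \<partial>lborel) + (\<integral>x. V0 x * v x * v x \<partial>lborel)
        + ((\<integral>x. (H1_deriv w x)\<^sup>2 \<partial>lborel) + (\<integral>x. V0 x * w x * w x \<partial>lborel))
        - 2 * ((\<integral>x. (H1_deriv (\<lambda>x. (1/2) * v x + (1/2) * w x) x)\<^sup>2 \<partial>lborel)
             + (\<integral>x. V0 x * ((1/2) * v x + (1/2) * w x) * ((1/2) * v x + (1/2) * w x) \<partial>lborel))
        = (1/2) * ((\<integral>x. (H1_deriv v x - H1_deriv w x)\<^sup>2 \<partial>lborel)
                 + (\<integral>x. V0 x * (v x - w x) * (v x - w x) \<partial>lborel))"
proof -
  note P = H1_props[OF v] and R = H1_props[OF w]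
  have mH: "(\<lambda>x. (1/2) * v x + (1/2) * w x) \<in> H1" by (rule H1_lin(1)[OF v w])
  note S = H1_props[OF mH]
  have iDv: "integrable lborel (\<lambda>x. (H1_deriv v x)\<^sup>2)" using P(4) by (simp add: L2_def)
  have iDw: "integrable lborel (\<lambda>x. (H1_deriv w x)\<^sup>2)" using R(4) by (simp add: L2_def)
  have iDvw: "integrable lborel (\<lambda>x. H1_deriv v x * H1_deriv w x)" by (rule L2_prod_integrable[OF P(4) R(4)])
  have ivv: "integrable lborel (\<lambda>x. V0 x * v x * v x)" by (rule V0_integrable[OF V0m KV P(2) P(2)])
  have iww: "integrable lborel (\<lambda>x. V0 x * w x * w x)" by (rule V0_integrable[OF V0m KV R(2) R(2)])
  have ivw: "integrable lborel (\<lambda>x. V0 x * v x * w x)" by (rule V0_integrable[OF V0m KV P(2) R(2)])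
  have ae: "AE x in lborel. H1_deriv (\<lambda>x. (1/2) * v x + (1/2) * w x) x = 1/2 * H1_deriv v x + 1/2 * H1_deriv w x"
    by (rule H1_lin(2)[OF v w])
  have e0: "(\<integral>x. (H1_deriv (\<lambda>x. (1/2) * v x + (1/2) * w x) x)\<^sup>2 \<partial>lborel)
      = (\<integral>x. (1/2 * H1_deriv v x + 1/2 * H1_deriv w x)\<^sup>2 \<partial>lborel)"
    by (rule integral_cong_AE) (use S(4) P(4) R(4) ae in \<open>auto simp: L2_def\<close>)
  have e1: "(\<integral>x. (1/2 * H1_deriv v x + 1/2 * H1_deriv w x)\<^sup>2 \<partial>lborel)
      = 1/4 * (\<integral>x. (H1_deriv v x)\<^sup>2 \<partial>lborel) + 1/4 * (\<integral>x. (H1_deriv w x)\<^sup>2 \<partial>lborel)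
        + 1/2 * (\<integral>x. H1_deriv v x * H1_deriv w x \<partial>lborel)"
  proof -
    have "(\<lambda>x. (1/2 * H1_deriv v x + 1/2 * H1_deriv w x)\<^sup>2)
        = (\<lambda>x. 1/4 * (H1_deriv v x)\<^sup>2 + 1/4 * (H1_deriv w x)\<^sup>2 + 1/2 * (H1_deriv v x * H1_deriv w x))"
      by (auto simp: power2_eq_square algebra_simps)
    then show ?thesis using iDv iDw iDvw by simp
  qed
  have e2: "(\<integral>x. (H1_deriv v x - H1_deriv w x)\<^sup>2 \<partial>lborel)
      = (\<integral>x. (H1_deriv v x)\<^sup>2 \<partial>lborel) + (\<integral>x. (H1_deriv w x)\<^sup>2 \<partial>lborel)
        - 2 * (\<integral>x. H1_deriv v x * H1_deriv w x \<partial>lborel)"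
  proof -
    have "(\<lambda>x. (H1_deriv v x - H1_deriv w x)\<^sup>2)
        = (\<lambda>x. (H1_deriv v x)\<^sup>2 + (H1_deriv w x)\<^sup>2 - 2 * (H1_deriv v x * H1_deriv w x))"
      by (auto simp: power2_eq_square algebra_simps)
    then show ?thesis using iDv iDw iDvw by simp
  qed
  have e3: "(\<integral>x. V0 x * ((1/2) * v x + (1/2) * w x) * ((1/2) * v x + (1/2) * w x) \<partial>lborel)
      = 1/4 * (\<integral>x. V0 x * v x * v x \<partial>lborel) + 1/4 * (\<integral>x. V0 x * w x * w x \<partial>lborel)
        + 1/2 * (\<integral>x. V0 x * v x * w x \<partial>lborel)"
  proof -
    have "(\<lambda>x. V0 x * ((1/2) * v x + (1/2) * w x) * ((1/2) * v x + (1/2) * w x))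
        = (\<lambda>x. 1/4 * (V0 x * v x * v x) + 1/4 * (V0 x * w x * w x) + 1/2 * (V0 x * v x * w x))"
      by (auto simp: algebra_simps)
    then show ?thesis using ivv iww ivw by simp
  qed
  have e4: "(\<integral>x. V0 x * (v x - w x) * (v x - w x) \<partial>lborel)
      = (\<integral>x. V0 x * v x * v x \<partial>lborel) + (\<integral>x. V0 x * w x * w x \<partial>lborel) - 2 * (\<integral>x. V0 x * v x * w x \<partial>lborel)"
  proof -
    have "(\<lambda>x. V0 x * (v x - w x) * (v x - w x))
        = (\<lambda>x. (V0 x * v x * v x) + (V0 x * w x * w x) - 2 * (V0 x * v x * w x))"
      by (auto simp: algebra_simps)
    then show ?thesis using ivv iww ivw by simp
  qed
  show ?thesis unfolding e0 e1 e2 e3 e4 by (simp add: field_simps)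
qed

lemma cauchy_from_bound:
  fixes X :: "nat \<Rightarrow> nat \<Rightarrow> real"
  assumes "\<And>n m. n \<le> m \<Longrightarrow> X n m \<le> \<beta> n" "\<And>n m. X n m = X m n"
    "\<And>n m. n \<le> m \<Longrightarrow> \<beta> m \<le> \<beta> n" "\<beta> \<longlonglongrightarrow> 0" "\<epsilon> > 0"
  shows "\<exists>N. \<forall>n\<ge>N. \<forall>m\<ge>N. X n m < \<epsilon>"
proof -
  obtain N where N: "\<And>n. n \<ge> N \<Longrightarrow> \<bar>\<beta> n\<bar> < \<epsilon>"
    using assms(4,5) unfolding LIMSEQ_iff by force
  show ?thesis
  proof (intro exI allI impI)
    fix n m assume "N \<le> n" "N \<le> m"
    show "X n m < \<epsilon>"
    proof (cases "n \<le> m")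
      case True
      then have "X n m \<le> \<beta> n" by (rule assms(1))
      then show ?thesis using N[OF \<open>N\<le>n\<close>] by linarith
    next
      case False
      then have "X m n \<le> \<beta> m" by (intro assms(1)) simp
      then show ?thesis using N[OF \<open>N\<le>m\<close>] assms(2)[of n m] by linarith
    qed
  qed
qed

theorem theorem5p2:
  fixes V0 :: "real \<Rightarrow> real" and mu_p mu_m :: "real measure" and a :: real
  assumes "V0 \<in> borel_measurable lborel"
    and "esssup lborel (\<lambda>x. ereal \<bar>V0 x\<bar>) < \<infinity>"
    and "esssup lborel (\<lambda>x. ereal (- V0 x)) < 0"
    and "finite_borel_measure mu_p" and "finite_borel_measure mu_m"
  shows "\<exists>u_a \<in> Kset a. (\<forall>u \<in> Kset a. Ifun u_a V0 mu_p mu_m \<le> Ifun u V0 mu_p mu_m)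
                      \<and> Ffun a V0 mu_p mu_m = Ifun u_a V0 mu_p mu_m"
proof -
  note V0m = assms(1) and fp = assms(4) and fm = assms(5)
  obtain c K where c: "0 < c" and cV: "AE x in lborel. c \<le> V0 x" and KV: "AE x in lborel. \<bar>V0 x\<bar> \<le> K"
    using V0_props[OF assms(2) assms(3)] by blast
  define Q :: "(real \<Rightarrow> real) \<Rightarrow> real" where "Q u = (\<integral>x. (H1_deriv u x)\<^sup>2 \<partial>lborel) + (\<integral>x. V0 x * u x * u x \<partial>lborel)" for u
  define W :: "(real \<Rightarrow> real) \<Rightarrow> real" where "W u = (\<integral>x. u x * u x \<partial>mu_p) - (\<integral>x. u x * u x \<partial>mu_m)" for u
  have IQW: "Ifun u V0 mu_p mu_m = Q u + W u" for u
    by (simp add: Ifun_def Vform_def Q_def W_def)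
  define Mm where "Mm = measure mu_m (space mu_m)"
  have KH1: "u \<in> H1" if "u \<in> Kset a" for u using that by (simp add: Kset_def)
  have Kb: "\<bar>u x\<bar> \<le> 1" if "u \<in> Kset a" for u x using that by (rule Kset_bound)
  have Kc: "continuous_on UNIV u" if "u \<in> Kset a" for u using H1_props(1)[OF KH1[OF that]] .
  have Wlow: "- Mm \<le> W u" if "u \<in> Kset a" for u
    using W_props(2)[OF fp Kc[OF that] Kb[OF that]] W_props(3)[OF fm Kc[OF that] Kb[OF that]]
    unfolding W_def Mm_def by linarith
  have Qlow: "(\<integral>x. (H1_deriv u x)\<^sup>2 \<partial>lborel) + c * (\<integral>x. (u x)\<^sup>2 \<partial>lborel) \<le> Q u" if "u \<in> H1" for u
    using V0_lower[OF V0m KV cV H1_props(2)[OF that]] by (simp add: Q_def)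
  have Qnn: "0 \<le> Q u" if "u \<in> H1" for u
  proof -
    have "0 \<le> c * (\<integral>x. (u x)\<^sup>2 \<partial>lborel)" using c by simp
    moreover have "0 \<le> (\<integral>x. (H1_deriv u x)\<^sup>2 \<partial>lborel)" by simp
    ultimately show ?thesis using Qlow[OF that] by linarith
  qed
  have QD: "(\<integral>x. (H1_deriv u x)\<^sup>2 \<partial>lborel) \<le> Q u" if "u \<in> H1" for u
  proof -
    have "0 \<le> c * (\<integral>x. (u x)\<^sup>2 \<partial>lborel)" using c by simp
    then show ?thesis using Qlow[OF that] by linarith
  qed
  define F where "F = Ffun a V0 mu_p mu_m"
  have ne: "Kset a \<noteq> {}" by (rule Kset_nonempty)
  have Ilow: "- Mm \<le> Ifun u V0 mu_p mu_m" if "u \<in> Kset a" for u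
    using Wlow[OF that] Qnn[OF KH1[OF that]] IQW[of u] by linarith
  have bdd: "bdd_below ((\<lambda>u. Ifun u V0 mu_p mu_m) ` Kset a)"
    by (rule bdd_belowI2[where m="- Mm"]) (rule Ilow)
  have Fle: "F \<le> Ifun u V0 mu_p mu_m" if "u \<in> Kset a" for u
    unfolding F_def Ffun_def by (rule cINF_lower[OF bdd that])
  have "\<forall>n. \<exists>u. u \<in> Kset a \<and> Ifun u V0 mu_p mu_m < F + 1 / real (Suc n)"
  proof
    fix n
    have "F < F + 1 / real (Suc n)" by simp
    then show "\<exists>u. u \<in> Kset a \<and> Ifun u V0 mu_p mu_m < F + 1 / real (Suc n)"
      using cINF_less_iff[OF ne bdd] unfolding F_def Ffun_def by blast
  qed
  then obtain us where us1: "\<And>n. us n \<in> Kset a" and us2: "\<And>n. Ifun (us n) V0 mu_p mu_m < F + 1 / real (Suc n)"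
    by (metis choice)
  define M where "M = F + 1 + Mm"
  have QM: "Q (us n) \<le> M" for n
  proof -
    have "Q (us n) + W (us n) < F + 1 / real (Suc n)" using us2[of n] IQW[of "us n"] by simp
    moreover have "1 / real (Suc n) \<le> 1" by simp
    moreover have "- Mm \<le> W (us n)" using Wlow us1 by blast
    ultimately show ?thesis unfolding M_def by linarith
  qed
  have DM: "(\<integral>x. (H1_deriv (us n) x)\<^sup>2 \<partial>lborel) \<le> M" for n
    using QD[OF KH1[OF us1]] QM by (rule order_trans)
  have eqc: "(us n x - us n y)\<^sup>2 \<le> M * \<bar>x - y\<bar>" for n x y
  proof -
    have "(us n x - us n y)\<^sup>2 \<le> \<bar>x - y\<bar> * (\<integral>t. (H1_deriv (us n) t)\<^sup>2 \<partial>lborel)"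
      by (rule H1_equicont[OF KH1[OF us1]])
    also have "\<dots> \<le> \<bar>x - y\<bar> * M" by (intro mult_left_mono DM) auto
    finally show ?thesis by (simp add: mult.commute)
  qed
  obtain s u where s: "strict_mono s" and su: "\<And>x. (\<lambda>n. us (s n) x) \<longlonglongrightarrow> u x"
    using pointwise_subseq[of us 1 M] Kb[OF us1] eqc by blast
  define w where "w n = us (s n)" for n
  have wK: "w n \<in> Kset a" for n by (simp add: w_def us1)
  have wconv: "(\<lambda>n. w n x) \<longlonglongrightarrow> u x" for x using su by (simp add: w_def)
  have ub: "\<bar>u x\<bar> \<le> 1" for x
    by (rule LIMSEQ_le_const2[OF tendsto_rabs[OF wconv]]) (use Kb[OF wK] in auto)
  have ua: "u a = 1"
  proof -
    have "(\<lambda>n. w n a) = (\<lambda>n. 1)" using wK by (auto simp: Kset_def)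
    then show ?thesis using wconv[of a] LIMSEQ_const_iff by metis
  qed
  have ueqc: "(u x - u y)\<^sup>2 \<le> M * \<bar>x - y\<bar>" for x y
  proof (rule LIMSEQ_le_const2)
    show "(\<lambda>n. (w n x - w n y)\<^sup>2) \<longlonglongrightarrow> (u x - u y)\<^sup>2" by (intro tendsto_intros wconv)
    show "\<exists>N. \<forall>n\<ge>N. (w n x - w n y)\<^sup>2 \<le> M * \<bar>x - y\<bar>" using eqc by (auto simp: w_def)
  qed
  have ucont: "continuous_on UNIV u" by (rule holder_cont[OF ueqc])
  have um: "u \<in> borel_measurable lborel" using borel_measurable_continuous_onI[OF ucont] by simp
  define e where "e n x = (SUP m\<in>{n..}. \<bar>w m x - u x\<bar>)" for n x
  have wb2: "\<bar>w m x - u x\<bar> \<le> 2" for m x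
    using Kb[OF wK, of m x] ub[of x] unfolding abs_le_iff by linarith
  have ebdd: "bdd_above ((\<lambda>m. \<bar>w m x - u x\<bar>) ` {n..})" for n x
    by (rule bdd_aboveI2[where M=2]) (rule wb2)
  have e_ge: "\<bar>w m x - u x\<bar> \<le> e n x" if "n \<le> m" for n m x
    unfolding e_def by (rule cSUP_upper[OF _ ebdd]) (use that in simp)
  have e_anti: "e m x \<le> e n x" if "n \<le> m" for n m x
    unfolding e_def by (rule cSUP_subset_mono) (use that ebdd in auto)
  have e_lim: "(\<lambda>n. e n x) \<longlonglongrightarrow> 0" for x
  proof (rule LIMSEQ_I)
    fix r :: real assume "0 < r"
    then have "0 < r / 2" by simp
    obtain N where N: "\<And>m. m \<ge> N \<Longrightarrow> \<bar>w m x - u x\<bar> < r / 2"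
      using wconv[of x, unfolded LIMSEQ_iff, rule_format, OF \<open>0 < r/2\<close>] by auto
    show "\<exists>no. \<forall>n\<ge>no. norm (e n x - 0) < r"
    proof (intro exI allI impI)
      fix n assume "N \<le> n"
      have "e n x \<le> r / 2" unfolding e_def
        by (rule cSUP_least) (use N \<open>N \<le> n\<close> in \<open>auto intro: less_imp_le\<close>)
      moreover have "0 \<le> e n x" using e_ge[of n n x] by simp
      ultimately show "norm (e n x - 0) < r" using \<open>0<r\<close> by simp
    qed
  qed
  define C where "C n = {v \<in> Kset a. \<forall>x. \<bar>v x - u x\<bar> \<le> e n x}" for n
  have wC: "w m \<in> C n" if "n \<le> m" for n m using wK e_ge that by (simp add: C_def)
  have CK: "v \<in> Kset a" if "v \<in> C n" for v n using that by (simp add: C_def)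
  have Cmono: "C m \<subseteq> C n" if "n \<le> m" for n m
    using e_anti[OF that] unfolding C_def by (auto intro: order_trans)
  have Cmid: "(\<lambda>x. (1/2) * v x + (1/2) * v' x) \<in> C n" if "v \<in> C n" "v' \<in> C n" for v v' n
  proof -
    have vK: "v \<in> Kset a" and v'K: "v' \<in> Kset a" using that CK by auto
    have "(\<lambda>x. (1/2) * v x + (1/2) * v' x) \<in> Kset a"
    proof (rule Kset_intro)
      show "(\<lambda>x. (1/2) * v x + (1/2) * v' x) \<in> H1" by (rule H1_lin(1)[OF KH1[OF vK] KH1[OF v'K]])
      show "\<bar>(1/2) * v x + (1/2) * v' x\<bar> \<le> 1" for x
        using Kb[OF vK, of x] Kb[OF v'K, of x] unfolding abs_le_iff by linarith
      show "(1/2) * v a + (1/2) * v' a = 1" using vK v'K by (simp add: Kset_def)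
    qed
    moreover have "\<bar>(1/2) * v x + (1/2) * v' x - u x\<bar> \<le> e n x" for x
    proof -
      have "\<bar>v x - u x\<bar> \<le> e n x" "\<bar>v' x - u x\<bar> \<le> e n x" using that by (auto simp: C_def)
      then show ?thesis unfolding abs_le_iff by linarith
    qed
    ultimately show ?thesis by (simp add: C_def)
  qed
  define d where "d n = (INF v\<in>C n. Q v)" for n
  have Cne: "C n \<noteq> {}" for n using wC[of n n] by blast
  have Cbdd: "bdd_below (Q ` C n)" for n
    by (rule bdd_belowI2[where m=0]) (use Qnn KH1 CK in blast)
  have d_le: "d n \<le> Q v" if "v \<in> C n" for v n unfolding d_def by (rule cINF_lower[OF Cbdd that])
  have d_mono: "d n \<le> d m" if "n \<le> m" for n m
    unfolding d_def by (rule cINF_superset_mono[OF Cne Cbdd Cmono[OF that]]) simp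
  have d_M: "d n \<le> M" for n using d_le[OF wC[of n n]] QM[of "s n"] by (simp add: w_def)
  have inc: "incseq d" by (simp add: incseq_def d_mono)
  have dbdd: "bdd_above (range d)" by (rule bdd_aboveI2[where M=M]) (rule d_M)
  define dl where "dl = (SUP n. d n)"
  have dlim: "d \<longlonglongrightarrow> dl" unfolding dl_def by (rule LIMSEQ_incseq_SUP[OF dbdd inc])
  have d_dl: "d n \<le> dl" for n unfolding dl_def by (rule cSUP_upper[OF UNIV_I dbdd])
  have "\<forall>n. \<exists>v. v \<in> C n \<and> Q v < d n + 1 / real (Suc n)"
  proof
    fix n
    have "d n < d n + 1 / real (Suc n)" by simp
    then show "\<exists>v. v \<in> C n \<and> Q v < d n + 1 / real (Suc n)"
      using cINF_less_iff[OF Cne Cbdd] unfolding d_def by blast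
  qed
  then obtain v where vC: "\<And>n. v n \<in> C n" and vQ: "\<And>n. Q (v n) < d n + 1 / real (Suc n)"
    by (metis choice)
  have vH: "v n \<in> H1" for n using KH1[OF CK[OF vC]] .
  define G where "G n = H1_deriv (v n)" for n
  have vL2: "L2 (v n)" for n using H1_props(2)[OF vH] .
  have GL2: "L2 (G n)" for n using H1_props(4)[OF vH] by (simp add: G_def)
  have pbound: "(\<integral>x. (G n x - G m x)\<^sup>2 \<partial>lborel) + c * (\<integral>x. (v n x - v m x)\<^sup>2 \<partial>lborel)
      \<le> 2 * (2 / real (Suc n) + (dl - d n))" if "n \<le> m" for n m
  proof -
    have vmC: "v m \<in> C n" using Cmono[OF that] vC by blast
    have midC: "(\<lambda>x. (1/2) * v n x + (1/2) * v m x) \<in> C n" by (rule Cmid[OF vC vmC])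
    have pe: "Q (v n) + Q (v m) - 2 * Q (\<lambda>x. (1/2) * v n x + (1/2) * v m x)
       = (1/2) * ((\<integral>x. (G n x - G m x)\<^sup>2 \<partial>lborel) + (\<integral>x. V0 x * (v n x - v m x) * (v n x - v m x) \<partial>lborel))"
      using para[OF V0m KV vH vH] unfolding Q_def G_def by simp
    have low: "c * (\<integral>x. (v n x - v m x)\<^sup>2 \<partial>lborel) \<le> (\<integral>x. V0 x * (v n x - v m x) * (v n x - v m x) \<partial>lborel)"
      by (rule V0_lower[OF V0m KV cV L2_diff[OF vL2 vL2]])
    define A where "A = (\<integral>x. (G n x - G m x)\<^sup>2 \<partial>lborel)"
    define B where "B = (\<integral>x. V0 x * (v n x - v m x) * (v n x - v m x) \<partial>lborel)"
    define I where "I = c * (\<integral>x. (v n x - v m x)\<^sup>2 \<partial>lborel)"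
    define q where "q = 1 / real (Suc n)"
    have "d n \<le> Q (\<lambda>x. (1/2) * v n x + (1/2) * v m x)" by (rule d_le[OF midC])
    then have h1: "1/2 * (A + B) \<le> Q (v n) + Q (v m) - 2 * d n" using pe unfolding A_def B_def by linarith
    have "Q (v m) < d m + 1 / real (Suc m)" by (rule vQ)
    moreover have "1 / real (Suc m) \<le> q" using that by (simp add: frac_le q_def)
    moreover have "d m \<le> dl" by (rule d_dl)
    moreover have "Q (v n) < d n + q" using vQ[of n] by (simp add: q_def)
    ultimately have h2: "Q (v n) + Q (v m) - 2 * d n \<le> 2 * q + (dl - d n)" by linarith
    have h3: "I \<le> B" using low unfolding I_def B_def .
    have "A + I \<le> 2 * (2 * q + (dl - d n))" using h1 h2 h3 by argo
    moreover have "2 / real (Suc n) = 2 * q" by (simp add: q_def)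
    ultimately show ?thesis unfolding A_def I_def by simp
  qed
  define \<beta> where "\<beta> n = 2 * (2 / real (Suc n) + (dl - d n))" for n
  have inv0: "(\<lambda>n. 1 / real (Suc n)) \<longlonglongrightarrow> 0"
    using LIMSEQ_inverse_real_of_nat by (simp add: inverse_eq_divide)
  have \<beta>lim: "\<beta> \<longlonglongrightarrow> 0"
  proof -
    have "(\<lambda>n. 2 * (2 * (1 / real (Suc n)) + (dl - d n))) \<longlonglongrightarrow> 2 * (2 * 0 + (dl - dl))"
      by (intro tendsto_intros inv0 dlim)
    moreover have "\<beta> = (\<lambda>n. 2 * (2 * (1 / real (Suc n)) + (dl - d n)))"
      by (rule ext) (simp add: \<beta>_def)
    ultimately show ?thesis by (simp only: mult_zero_right add_0 diff_self)
  qed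
  have \<beta>anti: "\<beta> m \<le> \<beta> n" if "n \<le> m" for n m
  proof -
    have "2 / real (Suc m) \<le> 2 / real (Suc n)" using that by (simp add: frac_le)
    then show ?thesis using d_mono[OF that] by (simp add: \<beta>_def)
  qed
  have cauchyG: "\<exists>N. \<forall>n\<ge>N. \<forall>m\<ge>N. (\<integral>x. (G n x - G m x)\<^sup>2 \<partial>lborel) < \<epsilon>" if "\<epsilon> > 0" for \<epsilon>
  proof (rule cauchy_from_bound[where \<beta>=\<beta>, OF _ _ \<beta>anti \<beta>lim that])
    fix n m :: nat assume "n \<le> m"
    have "0 \<le> c * (\<integral>x. (v n x - v m x)\<^sup>2 \<partial>lborel)" using c by simp
    then show "(\<integral>x. (G n x - G m x)\<^sup>2 \<partial>lborel) \<le> \<beta> n" using pbound[OF \<open>n\<le>m\<close>] unfolding \<beta>_def by linarith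
  next
    fix n m show "(\<integral>x. (G n x - G m x)\<^sup>2 \<partial>lborel) = (\<integral>x. (G m x - G n x)\<^sup>2 \<partial>lborel)"
      by (simp add: power2_commute)
  qed
  have cauchyv: "\<exists>N. \<forall>n\<ge>N. \<forall>m\<ge>N. (\<integral>x. (v n x - v m x)\<^sup>2 \<partial>lborel) < \<epsilon>" if "\<epsilon> > 0" for \<epsilon>
  proof (rule cauchy_from_bound[where \<beta>="\<lambda>n. \<beta> n / c", OF _ _ _ _ that])
    fix n m :: nat assume "n \<le> m"
    have "0 \<le> (\<integral>x. (G n x - G m x)\<^sup>2 \<partial>lborel)" by simp
    then have "c * (\<integral>x. (v n x - v m x)\<^sup>2 \<partial>lborel) \<le> \<beta> n" using pbound[OF \<open>n\<le>m\<close>] unfolding \<beta>_def by linarith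
    then show "(\<integral>x. (v n x - v m x)\<^sup>2 \<partial>lborel) \<le> \<beta> n / c" using c by (simp add: field_simps)
  next
    fix n m show "(\<integral>x. (v n x - v m x)\<^sup>2 \<partial>lborel) = (\<integral>x. (v m x - v n x)\<^sup>2 \<partial>lborel)"
      by (simp add: power2_commute)
  next
    fix n m :: nat assume "n \<le> m" then show "\<beta> m / c \<le> \<beta> n / c" using \<beta>anti c by (simp add: divide_right_mono)
  next
    show "(\<lambda>n. \<beta> n / c) \<longlonglongrightarrow> 0" using tendsto_divide_zero[OF \<beta>lim, of c] by simp
  qed
  obtain g rg where Lg: "L2 g" and "strict_mono rg" and "AE x in lborel. (\<lambda>k. G (rg k) x) \<longlonglongrightarrow> g x"
    and Gg: "(\<lambda>n. \<integral>x. (G n x - g x)\<^sup>2 \<partial>lborel) \<longlonglongrightarrow> 0"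
    by (rule L2_complete[OF GL2 cauchyG])
  obtain gh r where Lgh: "L2 gh" and r: "strict_mono r" and rconv: "AE x in lborel. (\<lambda>k. v (r k) x) \<longlonglongrightarrow> gh x"
    and vgh: "(\<lambda>n. \<integral>x. (v n x - gh x)\<^sup>2 \<partial>lborel) \<longlonglongrightarrow> 0"
    by (rule L2_complete[OF vL2 cauchyv])
  have vconv: "(\<lambda>n. v n x) \<longlonglongrightarrow> u x" for x
  proof -
    have "(\<lambda>n. v n x - u x) \<longlonglongrightarrow> 0"
    proof (rule Lim_null_comparison[OF always_eventually e_lim])
      show "\<forall>n. norm (v n x - u x) \<le> e n x" using vC by (simp add: C_def)
    qed
    then show ?thesis by (simp add: LIM_zero_iff)
  qed
  have ugh: "AE x in lborel. u x = gh x" using rconv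
  proof eventually_elim
    case (elim x)
    have "(\<lambda>k. v (r k) x) \<longlonglongrightarrow> u x" using LIMSEQ_subseq_LIMSEQ[OF vconv r] by (simp add: o_def)
    then show ?case using elim LIMSEQ_unique by blast
  qed
  have ghm: "gh \<in> borel_measurable lborel" using Lgh by (simp add: L2_def)
  have uL2: "L2 u"
  proof -
    have "integrable lborel (\<lambda>x. (gh x)\<^sup>2)" using Lgh by (simp add: L2_def)
    moreover have "integrable lborel (\<lambda>x. (u x)\<^sup>2) \<longleftrightarrow> integrable lborel (\<lambda>x. (gh x)\<^sup>2)"
      by (rule integrable_cong_AE) (use um ghm ugh in auto)
    ultimately show ?thesis using um by (simp add: L2_def)
  qed
  have vu: "(\<lambda>n. \<integral>x. (v n x - u x)\<^sup>2 \<partial>lborel) \<longlonglongrightarrow> 0"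
  proof -
    have "(\<integral>x. (v n x - u x)\<^sup>2 \<partial>lborel) = (\<integral>x. (v n x - gh x)\<^sup>2 \<partial>lborel)" for n
      by (rule integral_cong_AE) (use um ghm ugh vL2[of n] in \<open>auto simp: L2_def\<close>)
    then show ?thesis using vgh by simp
  qed
  have wdu: "weak_deriv u g"
    unfolding weak_deriv_def
  proof (intro conjI allI impI)
    show "g \<in> borel_measurable lborel" using Lg by (simp add: L2_def)
    fix \<phi> assume \<phi>: "test_fun \<phi>"
    have l1: "(\<lambda>n. \<integral>x. v n x * deriv \<phi> x \<partial>lborel) \<longlonglongrightarrow> (\<integral>x. u x * deriv \<phi> x \<partial>lborel)"
      by (rule L2_conv_inner[OF vL2 uL2 test_fun_L2_deriv[OF \<phi>] vu])
    have l2: "(\<lambda>n. \<integral>x. G n x * \<phi> x \<partial>lborel) \<longlonglongrightarrow> (\<integral>x. g x * \<phi> x \<partial>lborel)"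
      by (rule L2_conv_inner[OF GL2 Lg test_fun_L2[OF \<phi>] Gg])
    have eq: "(\<integral>x. v n x * deriv \<phi> x \<partial>lborel) = - (\<integral>x. G n x * \<phi> x \<partial>lborel)" for n
      using H1_props(3)[OF vH[of n]] \<phi> unfolding weak_deriv_def G_def by blast
    have "(\<lambda>n. \<integral>x. v n x * deriv \<phi> x \<partial>lborel) \<longlonglongrightarrow> - (\<integral>x. g x * \<phi> x \<partial>lborel)"
      unfolding eq by (rule tendsto_minus[OF l2])
    then show "(\<integral>x. u x * deriv \<phi> x \<partial>lborel) = - (\<integral>x. g x * \<phi> x \<partial>lborel)"
      using l1 LIMSEQ_unique by blast
  qed
  have uH1: "u \<in> H1" unfolding H1_def using ucont um uL2 wdu Lg by (auto simp: L2_def)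
  have uK: "u \<in> Kset a" by (rule Kset_intro[OF uH1 ub ua])
  have QDu: "(\<integral>x. (H1_deriv u x)\<^sup>2 \<partial>lborel) = (\<integral>x. (g x)\<^sup>2 \<partial>lborel)"
  proof -
    have "AE x in lborel. H1_deriv u x = g x"
      by (rule weak_deriv_unique[OF H1_props(3)[OF uH1] wdu ucont H1_props(4)[OF uH1] Lg])
    then show ?thesis
      by (intro integral_cong_AE) (use H1_props(4)[OF uH1] Lg in \<open>auto simp: L2_def\<close>)
  qed
  have Gsq: "(\<lambda>n. \<integral>x. (G n x)\<^sup>2 \<partial>lborel) \<longlonglongrightarrow> (\<integral>x. (g x)\<^sup>2 \<partial>lborel)"
    by (rule L2_conv_sq[OF GL2 Lg Gg])
  have V0sq: "(\<lambda>n. \<integral>x. V0 x * v n x * v n x \<partial>lborel) \<longlonglongrightarrow> (\<integral>x. V0 x * u x * u x \<partial>lborel)"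
  proof -
    define T1 where "T1 n = (\<integral>x. V0 x * (v n x - u x) * (v n x - u x) \<partial>lborel)" for n
    define T2 where "T2 n = (\<integral>x. (v n x - u x) * (V0 x * u x) \<partial>lborel)" for n
    have duL2: "L2 (\<lambda>x. v n x - u x)" for n by (rule L2_diff[OF vL2 uL2])
    have V0uL2: "L2 (\<lambda>x. V0 x * u x)" by (rule V0u_L2[OF V0m KV uL2])
    have split: "(\<integral>x. V0 x * v n x * v n x \<partial>lborel) = T1 n + 2 * T2 n + (\<integral>x. V0 x * u x * u x \<partial>lborel)" for n
    proof -
      have "(\<lambda>x. V0 x * v n x * v n x) = (\<lambda>x. V0 x * (v n x - u x) * (v n x - u x) + 2 * ((v n x - u x) * (V0 x * u x)) + V0 x * u x * u x)"
        by (auto simp: algebra_simps)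
      moreover have "integrable lborel (\<lambda>x. V0 x * (v n x - u x) * (v n x - u x))"
        by (rule V0_integrable[OF V0m KV duL2 duL2])
      moreover have "integrable lborel (\<lambda>x. (v n x - u x) * (V0 x * u x))"
        by (rule L2_prod_integrable[OF duL2 V0uL2])
      moreover have "integrable lborel (\<lambda>x. V0 x * u x * u x)" by (rule V0_integrable[OF V0m KV uL2 uL2])
      ultimately show ?thesis by (simp add: T1_def T2_def)
    qed
    have T1lim: "T1 \<longlonglongrightarrow> 0"
    proof (rule Lim_null_comparison[OF always_eventually])
      show "\<forall>n. norm (T1 n) \<le> \<bar>K\<bar> * (\<integral>x. (v n x - u x)\<^sup>2 \<partial>lborel)"
      proof
        fix n
        have "norm (T1 n) \<le> (\<integral>x. \<bar>V0 x * (v n x - u x) * (v n x - u x)\<bar> \<partial>lborel)"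
          unfolding T1_def by simp
        also have "\<dots> \<le> (\<integral>x. \<bar>K\<bar> * (v n x - u x)\<^sup>2 \<partial>lborel)"
        proof (rule integral_mono_AE)
          show "integrable lborel (\<lambda>x. \<bar>V0 x * (v n x - u x) * (v n x - u x)\<bar>)"
            using V0_integrable[OF V0m KV duL2 duL2] by simp
          show "integrable lborel (\<lambda>x. \<bar>K\<bar> * (v n x - u x)\<^sup>2)" using duL2[of n] by (simp add: L2_def)
          show "AE x in lborel. \<bar>V0 x * (v n x - u x) * (v n x - u x)\<bar> \<le> \<bar>K\<bar> * (v n x - u x)\<^sup>2"
            using KV
          proof eventually_elim
            case (elim x)
            have "\<bar>V0 x\<bar> * (v n x - u x)\<^sup>2 \<le> \<bar>K\<bar> * (v n x - u x)\<^sup>2" using elim by (intro mult_right_mono) auto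
            then show ?case by (simp add: abs_mult power2_eq_square)
          qed
        qed
        also have "\<dots> = \<bar>K\<bar> * (\<integral>x. (v n x - u x)\<^sup>2 \<partial>lborel)" by simp
        finally show "norm (T1 n) \<le> \<bar>K\<bar> * (\<integral>x. (v n x - u x)\<^sup>2 \<partial>lborel)" .
      qed
      show "(\<lambda>n. \<bar>K\<bar> * (\<integral>x. (v n x - u x)\<^sup>2 \<partial>lborel)) \<longlonglongrightarrow> 0"
        using tendsto_mult_right_zero[OF vu] .
    qed
    have T2lim: "T2 \<longlonglongrightarrow> 0"
    proof -
      have "(\<lambda>n. \<integral>x. (v n x - u x) * (V0 x * u x) \<partial>lborel) \<longlonglongrightarrow> (\<integral>x. 0 * (V0 x * u x) \<partial>lborel)"
        by (rule L2_conv_inner[OF duL2 L2_zero V0uL2]) (use vu in simp)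
      moreover have "T2 = (\<lambda>n. \<integral>x. (v n x - u x) * (V0 x * u x) \<partial>lborel)"
        by (rule ext) (simp add: T2_def)
      ultimately show ?thesis by simp
    qed
    have "(\<lambda>n. T1 n + 2 * T2 n + (\<integral>x. V0 x * u x * u x \<partial>lborel)) \<longlonglongrightarrow> 0 + 2 * 0 + (\<integral>x. V0 x * u x * u x \<partial>lborel)"
      by (intro tendsto_intros T1lim T2lim)
    then show ?thesis unfolding split by simp
  qed
  have Qv_lim1: "(\<lambda>n. Q (v n)) \<longlonglongrightarrow> Q u"
  proof -
    have "(\<lambda>n. (\<integral>x. (G n x)\<^sup>2 \<partial>lborel) + (\<integral>x. V0 x * v n x * v n x \<partial>lborel))
        \<longlonglongrightarrow> (\<integral>x. (g x)\<^sup>2 \<partial>lborel) + (\<integral>x. V0 x * u x * u x \<partial>lborel)"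
      by (rule tendsto_add[OF Gsq V0sq])
    then show ?thesis by (simp add: Q_def G_def QDu)
  qed
  have Qv_lim2: "(\<lambda>n. Q (v n)) \<longlonglongrightarrow> dl"
  proof (rule tendsto_sandwich[OF always_eventually always_eventually dlim])
    show "\<forall>n. d n \<le> Q (v n)" using d_le[OF vC] by blast
    show "\<forall>n. Q (v n) \<le> d n + 1 / real (Suc n)" using vQ less_imp_le by blast
    show "(\<lambda>n. d n + 1 / real (Suc n)) \<longlonglongrightarrow> dl" using tendsto_add[OF dlim inv0] by simp
  qed
  have Qu: "Q u = dl" using Qv_lim1 Qv_lim2 LIMSEQ_unique by blast
  have Wconv: "(\<lambda>n. W (w n)) \<longlonglongrightarrow> W u"
  proof -
    have "(\<lambda>n. \<integral>x. w n x * w n x \<partial>mu_p) \<longlonglongrightarrow> (\<integral>x. u x * u x \<partial>mu_p)"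
      by (rule W_conv[OF fp Kc[OF wK] ucont Kb[OF wK] wconv])
    moreover have "(\<lambda>n. \<integral>x. w n x * w n x \<partial>mu_m) \<longlonglongrightarrow> (\<integral>x. u x * u x \<partial>mu_m)"
      by (rule W_conv[OF fm Kc[OF wK] ucont Kb[OF wK] wconv])
    ultimately show ?thesis unfolding W_def by (rule tendsto_diff)
  qed
  have main: "dl + W u \<le> F"
  proof (rule LIMSEQ_le)
    show "(\<lambda>n. d n + W (w n)) \<longlonglongrightarrow> dl + W u" by (rule tendsto_add[OF dlim Wconv])
    show "(\<lambda>n. F + 1 / real (Suc n)) \<longlonglongrightarrow> F" using tendsto_add[OF tendsto_const inv0, of F] by simp
    show "\<exists>N. \<forall>n\<ge>N. d n + W (w n) \<le> F + 1 / real (Suc n)"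
    proof (intro exI allI impI)
      fix n :: nat
      have "d n \<le> Q (w n)" by (rule d_le[OF wC[of n n]]) simp
      moreover have "Q (w n) + W (w n) < F + 1 / real (Suc (s n))"
        using us2[of "s n"] IQW[of "w n"] by (simp add: w_def)
      moreover have "1 / real (Suc (s n)) \<le> 1 / real (Suc n)"
        using seq_suble[OF s, of n] by (simp add: frac_le)
      ultimately show "d n + W (w n) \<le> F + 1 / real (Suc n)" by linarith
    qed
  qed
  have Iu: "Ifun u V0 mu_p mu_m \<le> F" using main Qu IQW[of u] by simp
  show ?thesis
  proof (intro bexI conjI ballI)
    show "u \<in> Kset a" by (rule uK)
    fix u' assume "u' \<in> Kset a"
    then show "Ifun u V0 mu_p mu_m \<le> Ifun u' V0 mu_p mu_m" using Iu Fle[of u'] by linarith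
  next
    show "Ffun a V0 mu_p mu_m = Ifun u V0 mu_p mu_m" using Iu Fle[OF uK] by (simp add: F_def)
  qed
qed

end
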